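(* Let $X \subseteq \mathbb{P}^r$ be a projective variety of dimension $n$ over $\mathbb{C}$, and $p \in X$ a closed point. Suppose $m$ is a positive integer such that $\mathfrak{m}_{X,p}^m \subseteq J$ for every minimal reduction $J$ of $\mathfrak{m}_{X,p}$. If $L\subseteq\mathbb{P}^r$ is a reduction linear subspace at $(X,p)$, then $ll(\mathcal{O}_{X\cap L,p}) \leq m-1$.
   Context: For an Artinian local ring $(A,\mathfrak{m})$, the Loewy length is $ll(A):=\max\{i\mid \mathfrak{m}^i\neq 0\}$ (with $ll(A)=0$ if $A$ is a field). For a Noetherian local ring $(R,\mathfrak{m})$, an ideal $J\subseteq\mathfrak{m}$ is a reduction of $\mathfrak{m}$ if $\mathfrak{m}^{k+1}=J\mathfrak{m}^k$ for some $k\geq 0$; a minimal reduction is a reduction minimal with respect to inclusion. For $p\in X$ and a linear subspace $L\subseteq\mathbb{P}^r$ through $p$ cut out by linear forms $l_1,\dots,l_k$, let $\bar l_i\in\mathfrak{m}_{X,p}$ be their images (via $\mathfrak{m}_{X,p}=\mathfrak{m}_{\mathbb{P}^r,p}/I_{X,p}$); $L$ is a reduction linear subspace at $(X,p)$ if $(\bar l_1,\dots,\bar l_k)$ is a reduction of $\mathfrak{m}_{X,p}$. $X\cap L$ is the scheme-theoretic intersection. *)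

theory Defs
  imports Complex_Main "HOL-Library.Poly_Mapping" "HOL-Algebra.Ideal_Product"
begin

type_synonym mpoly = "(nat \<Rightarrow>\<^sub>0 nat) \<Rightarrow>\<^sub>0 complex"

definition mon_deg :: "(nat \<Rightarrow>\<^sub>0 nat) \<Rightarrow> nat" where
  "mon_deg a = (\<Sum>i\<in>Poly_Mapping.keys a. Poly_Mapping.lookup a i)"

definition mpoly_eval :: "mpoly \<Rightarrow> (nat \<Rightarrow> complex) \<Rightarrow> complex" where
  "mpoly_eval f x = (\<Sum>a\<in>Poly_Mapping.keys f.
      Poly_Mapping.lookup f a * (\<Prod>i\<in>Poly_Mapping.keys a. x i ^ Poly_Mapping.lookup a i))"

text \<open>The polynomial ring S = C[x_0,...,x_r] as a subset of mpoly.\<close>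
definition in_S :: "nat \<Rightarrow> mpoly \<Rightarrow> bool" where
  "in_S r f \<longleftrightarrow> (\<forall>a\<in>Poly_Mapping.keys f. Poly_Mapping.keys a \<subseteq> {..r})"

definition homog :: "nat \<Rightarrow> mpoly \<Rightarrow> bool" where
  "homog d f \<longleftrightarrow> (\<forall>a\<in>Poly_Mapping.keys f. mon_deg a = d)"

definition hom_part :: "nat \<Rightarrow> mpoly \<Rightarrow> mpoly" where
  "hom_part d f = (\<Sum>a\<in>{a\<in>Poly_Mapping.keys f. mon_deg a = d}.
                      Poly_Mapping.single a (Poly_Mapping.lookup f a))"

definition Var :: "nat \<Rightarrow> mpoly" where
  "Var i = Poly_Mapping.single (Poly_Mapping.single i 1) 1"

definition S_ideal :: "nat \<Rightarrow> mpoly set \<Rightarrow> bool" where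
  "S_ideal r I \<longleftrightarrow> (\<forall>f\<in>I. in_S r f) \<and> 0 \<in> I \<and> (\<forall>f\<in>I. \<forall>g\<in>I. f + g \<in> I)
      \<and> (\<forall>f\<in>I. \<forall>g. in_S r g \<longrightarrow> g * f \<in> I)"

definition S_homogeneous_ideal :: "nat \<Rightarrow> mpoly set \<Rightarrow> bool" where
  "S_homogeneous_ideal r I \<longleftrightarrow> S_ideal r I \<and> (\<forall>f\<in>I. \<forall>d. hom_part d f \<in> I)"

definition S_prime_ideal :: "nat \<Rightarrow> mpoly set \<Rightarrow> bool" where
  "S_prime_ideal r I \<longleftrightarrow> S_ideal r I \<and> 1 \<notin> I
      \<and> (\<forall>f g. in_S r f \<longrightarrow> in_S r g \<longrightarrow> f * g \<in> I \<longrightarrow> f \<in> I \<or> g \<in> I)"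

definition S_gen_ideal :: "nat \<Rightarrow> mpoly set \<Rightarrow> mpoly set" where
  "S_gen_ideal r G = \<Inter>{I. S_ideal r I \<and> G \<subseteq> I}"

text \<open>A projective variety X in P^r: the zero locus of a homogeneous prime ideal P of S
  (its homogeneous ideal).\<close>
definition proj_variety :: "nat \<Rightarrow> mpoly set \<Rightarrow> bool" where
  "proj_variety r P \<longleftrightarrow> S_homogeneous_ideal r P \<and> S_prime_ideal r P"

text \<open>Closed points of P^r are given by nonzero vectors (p_0,...,p_r) (coordinates beyond r are 0);
  p lies on the closed subscheme defined by the homogeneous ideal I iff all elements of I vanish at p.\<close>
definition proj_point :: "nat \<Rightarrow> (nat \<Rightarrow> complex) \<Rightarrow> bool" where
  "proj_point r p \<longleftrightarrow> (\<exists>i\<le>r. p i \<noteq> 0) \<and> (\<forall>i>r. p i = 0)"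

definition on_subscheme :: "mpoly set \<Rightarrow> (nat \<Rightarrow> complex) \<Rightarrow> bool" where
  "on_subscheme I p \<longleftrightarrow> (\<forall>f\<in>I. mpoly_eval f p = 0)"

text \<open>Homogeneous localization: fractions f/g with f, g homogeneous of the same degree and
  g(p) \<noteq> 0, where f/g = f'/g' iff s (f g' - f' g) \<in> I for some homogeneous s with s(p) \<noteq> 0.\<close>
definition frac_dom :: "nat \<Rightarrow> (nat \<Rightarrow> complex) \<Rightarrow> (mpoly \<times> mpoly) set" where
  "frac_dom r p = {(f, g). in_S r f \<and> in_S r g \<and> (\<exists>d. homog d f \<and> homog d g)
                          \<and> mpoly_eval g p \<noteq> 0}"

definition frac_cls :: "nat \<Rightarrow> mpoly set \<Rightarrow> (nat \<Rightarrow> complex) \<Rightarrow> mpoly \<times> mpoly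
      \<Rightarrow> (mpoly \<times> mpoly) set" where
  "frac_cls r I p x = {y \<in> frac_dom r p. \<exists>s d. in_S r s \<and> homog d s \<and> mpoly_eval s p \<noteq> 0
                         \<and> s * (fst x * snd y - fst y * snd x) \<in> I}"

definition frac_rep :: "(mpoly \<times> mpoly) set \<Rightarrow> mpoly \<times> mpoly" where
  "frac_rep A = (SOME x. x \<in> A)"

definition local_ring :: "nat \<Rightarrow> mpoly set \<Rightarrow> (nat \<Rightarrow> complex) \<Rightarrow> (mpoly \<times> mpoly) set ring" where
  "local_ring r I p =
     \<lparr> carrier = frac_cls r I p ` frac_dom r p,
       monoid.mult = (\<lambda>A B. frac_cls r I p
          (fst (frac_rep A) * fst (frac_rep B), snd (frac_rep A) * snd (frac_rep B))),
       one = frac_cls r I p (1, 1),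
       zero = frac_cls r I p (0, 1),
       add = (\<lambda>A B. frac_cls r I p
          (fst (frac_rep A) * snd (frac_rep B) + fst (frac_rep B) * snd (frac_rep A),
           snd (frac_rep A) * snd (frac_rep B))) \<rparr>"

definition max_ideal :: "('a, 'b) ring_scheme \<Rightarrow> 'a set" where
  "max_ideal R = carrier R - Units R"

primrec ideal_pow :: "('a, 'b) ring_scheme \<Rightarrow> 'a set \<Rightarrow> nat \<Rightarrow> 'a set" where
  "ideal_pow R I 0 = carrier R"
| "ideal_pow R I (Suc n) = ideal_prod R I (ideal_pow R I n)"

definition is_reduction_of_max :: "('a, 'b) ring_scheme \<Rightarrow> 'a set \<Rightarrow> bool" where
  "is_reduction_of_max R J \<longleftrightarrow> ideal J R \<and> J \<subseteq> max_ideal R \<and>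
     (\<exists>k. ideal_pow R (max_ideal R) (Suc k) = ideal_prod R J (ideal_pow R (max_ideal R) k))"

definition is_minimal_reduction_of_max :: "('a, 'b) ring_scheme \<Rightarrow> 'a set \<Rightarrow> bool" where
  "is_minimal_reduction_of_max R J \<longleftrightarrow> is_reduction_of_max R J \<and>
     (\<forall>J'. is_reduction_of_max R J' \<and> J' \<subseteq> J \<longrightarrow> J' = J)"

definition loewy_length :: "('a, 'b) ring_scheme \<Rightarrow> nat" where
  "loewy_length A = Max {i. ideal_pow A (max_ideal A) i \<noteq> {\<zero>\<^bsub>A\<^esub>}}"

definition linear_form :: "nat \<Rightarrow> mpoly \<Rightarrow> bool" where
  "linear_form r l \<longleftrightarrow> in_S r l \<and> homog 1 l"

text \<open>Image of a linear form l (vanishing at p) in m_{X,p}: the germ l / x_i, where x_i is the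
  first coordinate not vanishing at p.\<close>
definition germ_of_linear_form :: "nat \<Rightarrow> mpoly set \<Rightarrow> (nat \<Rightarrow> complex) \<Rightarrow> mpoly
      \<Rightarrow> (mpoly \<times> mpoly) set" where
  "germ_of_linear_form r I p l = frac_cls r I p (l, Var (LEAST i. p i \<noteq> 0))"

text \<open>The linear subspace L cut out by the linear forms ls passes through p and is a reduction
  linear subspace at (X,p).\<close>
definition reduction_linear_subspace :: "nat \<Rightarrow> mpoly set \<Rightarrow> (nat \<Rightarrow> complex) \<Rightarrow> mpoly list
      \<Rightarrow> bool" where
  "reduction_linear_subspace r P p ls \<longleftrightarrow>
     (\<forall>l\<in>set ls. linear_form r l \<and> mpoly_eval l p = 0) \<and>
     is_reduction_of_max (local_ring r P p)
        (genideal (local_ring r P p) (germ_of_linear_form r P p ` set ls))"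

text \<open>Homogeneous ideal of the scheme-theoretic intersection X \<inter> L.\<close>
definition intersection_ideal :: "nat \<Rightarrow> mpoly set \<Rightarrow> mpoly list \<Rightarrow> mpoly set" where
  "intersection_ideal r P ls = S_gen_ideal r (P \<union> set ls)"

end

theory Submission
  imports Defs
begin

section \<open>Polynomial basics\<close>

lemma update_eq_add: "a \<notin> Poly_Mapping.keys f \<Longrightarrow> Poly_Mapping.update a b f = f + Poly_Mapping.single a b"
  by (rule poly_mapping_eqI) (auto simp: lookup_update lookup_add lookup_single in_keys_iff)

lemma mpoly_induct [case_names zero add]:
  fixes P :: "('a \<Rightarrow>\<^sub>0 'b::monoid_add) \<Rightarrow> bool"
  assumes "P 0"
    and "\<And>f a c. a \<notin> Poly_Mapping.keys f \<Longrightarrow> c \<noteq> 0 \<Longrightarrow> P f \<Longrightarrow> P (f + Poly_Mapping.single a c)"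
  shows "P f"
proof (induction f rule: update_induct)
  case const then show ?case using assms(1) .
next
  case (update f a b)
  then show ?case using assms(2)[of a f b] update_eq_add[of a f b] by simp
qed

lemma keys_add_single:
  fixes f :: "'a \<Rightarrow>\<^sub>0 'b::monoid_add"
  assumes "a \<notin> Poly_Mapping.keys f" "c \<noteq> 0"
  shows "Poly_Mapping.keys (f + Poly_Mapping.single a c) = insert a (Poly_Mapping.keys f)"
  using assms by (auto simp: in_keys_iff lookup_add lookup_single when_def split: if_splits)

definition mon_eval :: "(nat \<Rightarrow>\<^sub>0 nat) \<Rightarrow> (nat \<Rightarrow> complex) \<Rightarrow> complex" where
  "mon_eval a x = (\<Prod>i\<in>Poly_Mapping.keys a. x i ^ Poly_Mapping.lookup a i)"

lemma mpoly_eval_mon: "mpoly_eval f x = (\<Sum>a\<in>Poly_Mapping.keys f. Poly_Mapping.lookup f a * mon_eval a x)"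
  unfolding mpoly_eval_def mon_eval_def ..

lemma mon_eval_superset:
  assumes "finite S" "Poly_Mapping.keys a \<subseteq> S"
  shows "mon_eval a x = (\<Prod>i\<in>S. x i ^ Poly_Mapping.lookup a i)"
  unfolding mon_eval_def
  by (rule prod.mono_neutral_left) (use assms in \<open>auto simp: in_keys_iff\<close>)

lemma keys_add_nat: "Poly_Mapping.keys (a + b :: 'a \<Rightarrow>\<^sub>0 nat) = Poly_Mapping.keys a \<union> Poly_Mapping.keys b"
  by (auto simp: in_keys_iff lookup_add)

lemma mon_eval_add: "mon_eval (a + b) x = mon_eval a x * mon_eval b x"
proof -
  let ?S = "Poly_Mapping.keys a \<union> Poly_Mapping.keys b"
  have "mon_eval (a + b) x = (\<Prod>i\<in>?S. x i ^ Poly_Mapping.lookup (a+b) i)"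
    by (rule mon_eval_superset) (auto simp: keys_add_nat)
  also have "\<dots> = (\<Prod>i\<in>?S. x i ^ Poly_Mapping.lookup a i) * (\<Prod>i\<in>?S. x i ^ Poly_Mapping.lookup b i)"
    by (simp add: lookup_add power_add prod.distrib)
  also have "\<dots> = mon_eval a x * mon_eval b x"
    by (subst (1 2) mon_eval_superset[of ?S]) auto
  finally show ?thesis .
qed

lemma mon_eval_zero [simp]: "mon_eval 0 x = 1"
  by (simp add: mon_eval_def)

lemma mpoly_eval_zero [simp]: "mpoly_eval 0 x = 0"
  by (simp add: mpoly_eval_def)

lemma mpoly_eval_add: "mpoly_eval (f + g) x = mpoly_eval f x + mpoly_eval g x"
  unfolding mpoly_eval_mon
  by (rule setsum_keys_plus_distrib) (auto simp: distrib_right)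

lemma mpoly_eval_single: "mpoly_eval (Poly_Mapping.single a c) x = c * mon_eval a x"
  by (simp add: mpoly_eval_mon)

lemma mpoly_eval_uminus: "mpoly_eval (- f) x = - mpoly_eval f x"
  using mpoly_eval_add[of f "-f" x] by (simp add: add_eq_0_iff)

lemma mpoly_eval_diff: "mpoly_eval (f - g) x = mpoly_eval f x - mpoly_eval g x"
  using mpoly_eval_add[of f "-g" x] by (simp add: mpoly_eval_uminus)

lemma mpoly_eval_mult_single:
  "mpoly_eval (Poly_Mapping.single a c * g) x = c * mon_eval a x * mpoly_eval g x"
proof (induction g rule: mpoly_induct)
  case zero then show ?case by simp
next
  case (add f b d)
  then show ?case
    by (simp add: distrib_left mpoly_eval_add mult_single mpoly_eval_single mon_eval_add algebra_simps)
qed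

lemma mpoly_eval_mult: "mpoly_eval (f * g) x = mpoly_eval f x * mpoly_eval g x"
proof (induction f rule: mpoly_induct)
  case zero then show ?case by simp
next
  case (add f a c)
  then show ?case
    by (simp add: distrib_right mpoly_eval_add mpoly_eval_mult_single mpoly_eval_single)
qed

lemma mpoly_eval_one [simp]: "mpoly_eval 1 x = 1"
proof -
  have "(1::mpoly) = Poly_Mapping.single 0 1" by simp
  then show ?thesis by (metis mpoly_eval_single mon_eval_zero mult_1)
qed

lemma mpoly_eval_power: "mpoly_eval (f ^ n) x = mpoly_eval f x ^ n"
  by (induction n) (simp_all add: mpoly_eval_mult)

lemma mpoly_eval_Var: "mpoly_eval (Var i) x = x i"
  by (simp add: Var_def mpoly_eval_single mon_eval_def)

lemma mon_deg_superset:
  assumes "finite S" "Poly_Mapping.keys a \<subseteq> S"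
  shows "mon_deg a = (\<Sum>i\<in>S. Poly_Mapping.lookup a i)"
  unfolding mon_deg_def
  by (rule sum.mono_neutral_left) (use assms in \<open>auto simp: in_keys_iff\<close>)

lemma mon_deg_add: "mon_deg (a + b) = mon_deg a + mon_deg b"
proof -
  let ?S = "Poly_Mapping.keys a \<union> Poly_Mapping.keys b"
  have "mon_deg (a + b) = (\<Sum>i\<in>?S. Poly_Mapping.lookup (a+b) i)"
    by (rule mon_deg_superset) (auto simp: keys_add_nat)
  also have "\<dots> = (\<Sum>i\<in>?S. Poly_Mapping.lookup a i) + (\<Sum>i\<in>?S. Poly_Mapping.lookup b i)"
    by (simp add: lookup_add sum.distrib)
  also have "\<dots> = mon_deg a + mon_deg b"
    by (subst (1 2) mon_deg_superset[of ?S]) auto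
  finally show ?thesis .
qed

lemma mon_deg_zero [simp]: "mon_deg 0 = 0"
  by (simp add: mon_deg_def)

lemma mon_deg_single: "mon_deg (Poly_Mapping.single i k) = k"
  by (simp add: mon_deg_def)

lemma in_S_zero [simp]: "in_S r 0"
  by (simp add: in_S_def)

lemma in_S_add: "in_S r f \<Longrightarrow> in_S r g \<Longrightarrow> in_S r (f + g)"
  unfolding in_S_def using keys_add[of f g] by blast

lemma in_S_uminus: "in_S r f \<Longrightarrow> in_S r (- f)"
  unfolding in_S_def by simp

lemma in_S_diff: "in_S r f \<Longrightarrow> in_S r g \<Longrightarrow> in_S r (f - g)"
  unfolding in_S_def using keys_diff[of f g] by blast

lemma in_S_mult: "in_S r f \<Longrightarrow> in_S r g \<Longrightarrow> in_S r (f * g)"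
  unfolding in_S_def using keys_mult[of f g] by (fastforce simp: keys_add_nat)

lemma in_S_single: "Poly_Mapping.keys a \<subseteq> {..r} \<Longrightarrow> in_S r (Poly_Mapping.single a c)"
  unfolding in_S_def by simp

lemma in_S_one [simp]: "in_S r 1"
  unfolding in_S_def by simp

lemma in_S_power: "in_S r f \<Longrightarrow> in_S r (f ^ n)"
  by (induction n) (simp_all add: in_S_mult)

lemma in_S_Var: "i \<le> r \<Longrightarrow> in_S r (Var i)"
  unfolding Var_def by (rule in_S_single) simp

definition Cst :: "complex \<Rightarrow> mpoly" where "Cst c = Poly_Mapping.single 0 c"

lemma in_S_Cst [simp]: "in_S r (Cst c)"
  unfolding Cst_def by (rule in_S_single) simp

lemma homog_Cst [simp]: "homog 0 (Cst c)"
  unfolding Cst_def homog_def by simp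

lemma eval_Cst [simp]: "mpoly_eval (Cst c) x = c"
  unfolding Cst_def by (simp add: mpoly_eval_single)

lemma Cst_mult: "Cst (a * b) = Cst a * Cst b"
  unfolding Cst_def by (simp add: mult_single)

lemma Cst_one [simp]: "Cst 1 = 1"
  unfolding Cst_def by simp

lemma homog_zero [simp]: "homog d 0"
  by (simp add: homog_def)

lemma homog_add: "homog d f \<Longrightarrow> homog d g \<Longrightarrow> homog d (f + g)"
  unfolding homog_def using keys_add[of f g] by blast

lemma homog_uminus: "homog d f \<Longrightarrow> homog d (- f)"
  unfolding homog_def by simp

lemma homog_diff: "homog d f \<Longrightarrow> homog d g \<Longrightarrow> homog d (f - g)"
  unfolding homog_def using keys_diff[of f g] by blast

lemma homog_mult: "homog d f \<Longrightarrow> homog e g \<Longrightarrow> homog (d + e) (f * g)"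
  unfolding homog_def using keys_mult[of f g] by (fastforce simp: mon_deg_add)

lemma homog_one [simp]: "homog 0 1"
  unfolding homog_def by simp

lemma homog_power: "homog d f \<Longrightarrow> homog (n * d) (f ^ n)"
  by (induction n) (simp_all add: homog_mult)

lemma homog_Var: "homog 1 (Var i)"
  unfolding homog_def Var_def by (simp add: mon_deg_single)

lemma homog_single: "mon_deg a = d \<Longrightarrow> homog d (Poly_Mapping.single a c)"
  unfolding homog_def by simp

lemma in_S_add_single_D:
  assumes "a \<notin> Poly_Mapping.keys f" "c \<noteq> 0" "in_S r (f + Poly_Mapping.single a c)"
  shows "in_S r f" "Poly_Mapping.keys a \<subseteq> {..r}"
  using assms unfolding in_S_def by (auto simp: keys_add_single)

lemma homog_add_single_D:
  assumes "a \<notin> Poly_Mapping.keys f" "c \<noteq> 0" "homog d (f + Poly_Mapping.single a c)"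
  shows "homog d f" "mon_deg a = d"
  using assms unfolding homog_def by (auto simp: keys_add_single)

section \<open>The local ring construction\<close>

definition eqv :: "nat \<Rightarrow> mpoly set \<Rightarrow> (nat \<Rightarrow> complex) \<Rightarrow> mpoly \<times> mpoly \<Rightarrow> mpoly \<times> mpoly \<Rightarrow> bool" where
  "eqv r I p x y \<longleftrightarrow> (\<exists>s d. in_S r s \<and> homog d s \<and> mpoly_eval s p \<noteq> 0
                         \<and> s * (fst x * snd y - fst y * snd x) \<in> I)"

definition mulp :: "mpoly \<times> mpoly \<Rightarrow> mpoly \<times> mpoly \<Rightarrow> mpoly \<times> mpoly" where
  "mulp x y = (fst x * fst y, snd x * snd y)"

definition addp :: "mpoly \<times> mpoly \<Rightarrow> mpoly \<times> mpoly \<Rightarrow> mpoly \<times> mpoly" where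
  "addp x y = (fst x * snd y + fst y * snd x, snd x * snd y)"

lemma frac_cls_eqv: "frac_cls r I p x = {y \<in> frac_dom r p. eqv r I p x y}"
  unfolding frac_cls_def eqv_def by simp

lemma frac_domD:
  assumes "x \<in> frac_dom r p"
  shows "in_S r (fst x)" "in_S r (snd x)" "mpoly_eval (snd x) p \<noteq> 0"
    "\<exists>d. homog d (fst x) \<and> homog d (snd x)"
  using assms unfolding frac_dom_def by auto

lemma frac_domI:
  "in_S r f \<Longrightarrow> in_S r g \<Longrightarrow> homog d f \<Longrightarrow> homog d g \<Longrightarrow> mpoly_eval g p \<noteq> 0 \<Longrightarrow> (f, g) \<in> frac_dom r p"
  unfolding frac_dom_def by auto

lemma mulp_dom: "x \<in> frac_dom r p \<Longrightarrow> y \<in> frac_dom r p \<Longrightarrow> mulp x y \<in> frac_dom r p"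
proof -
  assume x: "x \<in> frac_dom r p" and y: "y \<in> frac_dom r p"
  obtain d where d: "homog d (fst x)" "homog d (snd x)" using frac_domD(4)[OF x] by blast
  obtain e where e: "homog e (fst y)" "homog e (snd y)" using frac_domD(4)[OF y] by blast
  show ?thesis unfolding mulp_def
    using frac_domD[OF x] frac_domD[OF y] homog_mult[OF d(1) e(1)] homog_mult[OF d(2) e(2)]
    by (intro frac_domI) (auto simp: in_S_mult mpoly_eval_mult)
qed

lemma addp_dom: "x \<in> frac_dom r p \<Longrightarrow> y \<in> frac_dom r p \<Longrightarrow> addp x y \<in> frac_dom r p"
proof -
  assume x: "x \<in> frac_dom r p" and y: "y \<in> frac_dom r p"
  obtain d where d: "homog d (fst x)" "homog d (snd x)" using frac_domD(4)[OF x] by blast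
  obtain e where e: "homog e (fst y)" "homog e (snd y)" using frac_domD(4)[OF y] by blast
  have "homog (d+e) (fst x * snd y + fst y * snd x)"
    using homog_mult[OF d(1) e(2)] homog_mult[OF e(1) d(2)] by (simp add: add.commute homog_add)
  moreover have "homog (d+e) (snd x * snd y)" using homog_mult[OF d(2) e(2)] .
  ultimately show ?thesis unfolding addp_def
    using frac_domD[OF x] frac_domD[OF y]
    by (intro frac_domI) (auto simp: in_S_mult in_S_add mpoly_eval_mult)
qed

lemma one_dom: "(1, 1) \<in> frac_dom r p"
  by (rule frac_domI[where d=0]) auto

lemma zero_dom: "(0, 1) \<in> frac_dom r p"
  by (rule frac_domI[where d=0]) auto

locale loc =
  fixes r :: nat and I :: "mpoly set" and p :: "nat \<Rightarrow> complex"
  assumes I_ideal: "S_ideal r I"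
begin

abbreviation "FD \<equiv> frac_dom r p"
abbreviation "cls \<equiv> frac_cls r I p"
abbreviation "RR \<equiv> local_ring r I p"
abbreviation "EQ \<equiv> eqv r I p"

lemma I_zero: "0 \<in> I" using I_ideal unfolding S_ideal_def by blast
lemma I_add: "f \<in> I \<Longrightarrow> g \<in> I \<Longrightarrow> f + g \<in> I" using I_ideal unfolding S_ideal_def by blast
lemma I_lmult: "f \<in> I \<Longrightarrow> in_S r g \<Longrightarrow> g * f \<in> I" using I_ideal unfolding S_ideal_def by blast
lemma I_rmult: "f \<in> I \<Longrightarrow> in_S r g \<Longrightarrow> f * g \<in> I" using I_lmult by (simp add: mult.commute)
lemma I_S: "f \<in> I \<Longrightarrow> in_S r f" using I_ideal unfolding S_ideal_def by blast
lemma I_neg: "f \<in> I \<Longrightarrow> - f \<in> I"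
  using I_lmult[of f "-1"] by (simp add: in_S_uminus)

lemma eq_refl: "EQ x x"
  unfolding eqv_def by (intro exI[of _ 1] exI[of _ 0]) (simp add: I_zero)

lemma eq_sym: "EQ x y \<Longrightarrow> EQ y x"
  unfolding eqv_def
proof (elim exE conjE, intro exI conjI)
  fix s d assume "in_S r s" "homog d s" "mpoly_eval s p \<noteq> 0" "s * (fst x * snd y - fst y * snd x) \<in> I"
  then show "in_S r s" "homog d s" "mpoly_eval s p \<noteq> 0" "s * (fst y * snd x - fst x * snd y) \<in> I"
    using I_neg[of "s * (fst x * snd y - fst y * snd x)"] by (simp_all add: algebra_simps)
qed

lemma eq_trans:
  assumes xy: "EQ x y" and yz: "EQ y z" and y: "y \<in> FD" and x: "x \<in> FD" and z: "z \<in> FD"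
  shows "EQ x z"
proof -
  obtain s1 d1 where s1: "in_S r s1" "homog d1 s1" "mpoly_eval s1 p \<noteq> 0"
    "s1 * (fst x * snd y - fst y * snd x) \<in> I" using xy unfolding eqv_def by blast
  obtain s2 d2 where s2: "in_S r s2" "homog d2 s2" "mpoly_eval s2 p \<noteq> 0"
    "s2 * (fst y * snd z - fst z * snd y) \<in> I" using yz unfolding eqv_def by blast
  obtain e where e: "homog e (snd y)" using frac_domD(4)[OF y] by blast
  have eqn: "s1 * s2 * snd y * (fst x * snd z - fst z * snd x)
      = (s2 * snd z) * (s1 * (fst x * snd y - fst y * snd x)) + (s1 * snd x) * (s2 * (fst y * snd z - fst z * snd y))"
    by (simp add: algebra_simps)
  have "(s2 * snd z) * (s1 * (fst x * snd y - fst y * snd x)) + (s1 * snd x) * (s2 * (fst y * snd z - fst z * snd y)) \<in> I"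
    using s1 s2 frac_domD[OF x] frac_domD[OF z]
    by (intro I_add[OF I_lmult[OF s1(4)] I_lmult[OF s2(4)]]) (auto simp: in_S_mult)
  then show ?thesis unfolding eqv_def
    using s1 s2 frac_domD[OF y] e eqn
    by (intro exI[of _ "s1 * s2 * snd y"] exI[of _ "d1 + d2 + e"])
       (auto simp: in_S_mult mpoly_eval_mult intro!: homog_mult)
qed

lemma cls_eq_iff: "x \<in> FD \<Longrightarrow> y \<in> FD \<Longrightarrow> cls x = cls y \<longleftrightarrow> EQ x y"
proof
  assume x: "x \<in> FD" and y: "y \<in> FD" and e: "cls x = cls y"
  have "y \<in> cls y" unfolding frac_cls_eqv using y eq_refl by blast
  then show "EQ x y" using e unfolding frac_cls_eqv by blast
next
  assume x: "x \<in> FD" and y: "y \<in> FD" and e: "EQ x y"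
  show "cls x = cls y" unfolding frac_cls_eqv
    using eq_trans[OF e _ y x] eq_trans[OF eq_sym[OF e] _ x y] by blast
qed

lemma cls_self: "x \<in> FD \<Longrightarrow> x \<in> cls x"
  unfolding frac_cls_eqv using eq_refl by blast

lemma rep_in: "x \<in> FD \<Longrightarrow> frac_rep (cls x) \<in> cls x"
  unfolding frac_rep_def by (rule someI_ex) (use cls_self in blast)

lemma rep_dom: "x \<in> FD \<Longrightarrow> frac_rep (cls x) \<in> FD"
  using rep_in unfolding frac_cls_eqv by blast

lemma rep_eq: "x \<in> FD \<Longrightarrow> EQ x (frac_rep (cls x))"
  using rep_in unfolding frac_cls_eqv by blast

lemma cls_rep: "x \<in> FD \<Longrightarrow> cls (frac_rep (cls x)) = cls x"
  using cls_eq_iff rep_dom rep_eq eq_sym by metis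

lemma cls_eqI: "x \<in> FD \<Longrightarrow> y \<in> FD \<Longrightarrow> fst x * snd y = fst y * snd x \<Longrightarrow> cls x = cls y"
proof -
  assume x: "x \<in> FD" and y: "y \<in> FD" and e: "fst x * snd y = fst y * snd x"
  have "EQ x y" unfolding eqv_def
    by (rule exI[of _ 1], rule exI[of _ 0]) (simp add: e I_zero)
  then show ?thesis using cls_eq_iff[OF x y] by simp
qed

lemma mulp_cong:
  assumes "EQ x x'" "EQ y y'" "x \<in> FD" "x' \<in> FD" "y \<in> FD" "y' \<in> FD"
  shows "EQ (mulp x y) (mulp x' y')"
proof -
  obtain s1 d1 where s1: "in_S r s1" "homog d1 s1" "mpoly_eval s1 p \<noteq> 0"
    "s1 * (fst x * snd x' - fst x' * snd x) \<in> I" using assms(1) unfolding eqv_def by blast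
  obtain s2 d2 where s2: "in_S r s2" "homog d2 s2" "mpoly_eval s2 p \<noteq> 0"
    "s2 * (fst y * snd y' - fst y' * snd y) \<in> I" using assms(2) unfolding eqv_def by blast
  have eqn: "s1 * s2 * (fst (mulp x y) * snd (mulp x' y') - fst (mulp x' y') * snd (mulp x y))
     = (s2 * fst y * snd y') * (s1 * (fst x * snd x' - fst x' * snd x))
       + (s1 * fst x' * snd x) * (s2 * (fst y * snd y' - fst y' * snd y))"
    unfolding mulp_def by (simp add: algebra_simps)
  have "(s2 * fst y * snd y') * (s1 * (fst x * snd x' - fst x' * snd x))
       + (s1 * fst x' * snd x) * (s2 * (fst y * snd y' - fst y' * snd y)) \<in> I"
    using s1 s2 frac_domD[OF assms(3)] frac_domD[OF assms(4)] frac_domD[OF assms(5)] frac_domD[OF assms(6)]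
    by (intro I_add[OF I_lmult[OF s1(4)] I_lmult[OF s2(4)]]) (auto simp: in_S_mult)
  then show ?thesis unfolding eqv_def using s1 s2 eqn
    by (intro exI[of _ "s1 * s2"] exI[of _ "d1 + d2"])
       (auto simp: in_S_mult mpoly_eval_mult intro!: homog_mult)
qed

lemma addp_cong:
  assumes "EQ x x'" "EQ y y'" "x \<in> FD" "x' \<in> FD" "y \<in> FD" "y' \<in> FD"
  shows "EQ (addp x y) (addp x' y')"
proof -
  obtain s1 d1 where s1: "in_S r s1" "homog d1 s1" "mpoly_eval s1 p \<noteq> 0"
    "s1 * (fst x * snd x' - fst x' * snd x) \<in> I" using assms(1) unfolding eqv_def by blast
  obtain s2 d2 where s2: "in_S r s2" "homog d2 s2" "mpoly_eval s2 p \<noteq> 0"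
    "s2 * (fst y * snd y' - fst y' * snd y) \<in> I" using assms(2) unfolding eqv_def by blast
  have eqn: "s1 * s2 * (fst (addp x y) * snd (addp x' y') - fst (addp x' y') * snd (addp x y))
     = (s2 * snd y * snd y') * (s1 * (fst x * snd x' - fst x' * snd x))
       + (s1 * snd x * snd x') * (s2 * (fst y * snd y' - fst y' * snd y))"
    unfolding addp_def by (simp add: algebra_simps)
  have "(s2 * snd y * snd y') * (s1 * (fst x * snd x' - fst x' * snd x))
       + (s1 * snd x * snd x') * (s2 * (fst y * snd y' - fst y' * snd y)) \<in> I"
    using s1 s2 frac_domD[OF assms(3)] frac_domD[OF assms(4)] frac_domD[OF assms(5)] frac_domD[OF assms(6)]
    by (intro I_add[OF I_lmult[OF s1(4)] I_lmult[OF s2(4)]]) (auto simp: in_S_mult)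
  then show ?thesis unfolding eqv_def using s1 s2 eqn
    by (intro exI[of _ "s1 * s2"] exI[of _ "d1 + d2"])
       (auto simp: in_S_mult mpoly_eval_mult intro!: homog_mult)
qed

lemma carrier_R: "carrier RR = cls ` FD"
  unfolding local_ring_def by simp

lemma cls_in: "x \<in> FD \<Longrightarrow> cls x \<in> carrier RR"
  unfolding carrier_R by blast

lemma cls_mult: "x \<in> FD \<Longrightarrow> y \<in> FD \<Longrightarrow> cls x \<otimes>\<^bsub>RR\<^esub> cls y = cls (mulp x y)"
proof -
  assume x: "x \<in> FD" and y: "y \<in> FD"
  have "cls x \<otimes>\<^bsub>RR\<^esub> cls y = cls (mulp (frac_rep (cls x)) (frac_rep (cls y)))"
    unfolding local_ring_def mulp_def by simp
  also have "\<dots> = cls (mulp x y)"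
  proof -
    have "EQ (mulp (frac_rep (cls x)) (frac_rep (cls y))) (mulp x y)"
      by (rule mulp_cong[OF eq_sym[OF rep_eq[OF x]] eq_sym[OF rep_eq[OF y]] rep_dom[OF x] x rep_dom[OF y] y])
    then show ?thesis
      using cls_eq_iff[OF mulp_dom[OF rep_dom[OF x] rep_dom[OF y]] mulp_dom[OF x y]] by simp
  qed
  finally show ?thesis .
qed

lemma cls_add: "x \<in> FD \<Longrightarrow> y \<in> FD \<Longrightarrow> cls x \<oplus>\<^bsub>RR\<^esub> cls y = cls (addp x y)"
proof -
  assume x: "x \<in> FD" and y: "y \<in> FD"
  have "cls x \<oplus>\<^bsub>RR\<^esub> cls y = cls (addp (frac_rep (cls x)) (frac_rep (cls y)))"
    unfolding local_ring_def addp_def by simp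
  also have "\<dots> = cls (addp x y)"
  proof -
    have "EQ (addp (frac_rep (cls x)) (frac_rep (cls y))) (addp x y)"
      by (rule addp_cong[OF eq_sym[OF rep_eq[OF x]] eq_sym[OF rep_eq[OF y]] rep_dom[OF x] x rep_dom[OF y] y])
    then show ?thesis
      using cls_eq_iff[OF addp_dom[OF rep_dom[OF x] rep_dom[OF y]] addp_dom[OF x y]] by simp
  qed
  finally show ?thesis .
qed

lemma one_R: "\<one>\<^bsub>RR\<^esub> = cls (1, 1)" unfolding local_ring_def by simp
lemma zero_R: "\<zero>\<^bsub>RR\<^esub> = cls (0, 1)" unfolding local_ring_def by simp

lemma carrier_E: "A \<in> carrier RR \<Longrightarrow> (\<And>x. x \<in> FD \<Longrightarrow> A = cls x \<Longrightarrow> P) \<Longrightarrow> P"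
  unfolding carrier_R by blast

lemma cls_add_assoc: "x \<in> FD \<Longrightarrow> y \<in> FD \<Longrightarrow> z \<in> FD \<Longrightarrow>
    cls (addp (addp x y) z) = cls (addp x (addp y z))"
  by (rule cls_eqI) (simp_all add: addp_dom, simp add: addp_def algebra_simps)

lemma cls_add_comm: "x \<in> FD \<Longrightarrow> y \<in> FD \<Longrightarrow> cls (addp x y) = cls (addp y x)"
  by (rule cls_eqI) (simp_all add: addp_dom, simp add: addp_def algebra_simps)

lemma cls_add_zero: "x \<in> FD \<Longrightarrow> cls (addp (0,1) x) = cls x"
  by (rule cls_eqI) (simp_all add: addp_dom zero_dom, simp add: addp_def)

lemma cls_mult_assoc: "x \<in> FD \<Longrightarrow> y \<in> FD \<Longrightarrow> z \<in> FD \<Longrightarrow>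
    cls (mulp (mulp x y) z) = cls (mulp x (mulp y z))"
  by (rule cls_eqI) (simp_all add: mulp_dom, simp add: mulp_def algebra_simps)

lemma cls_mult_comm: "x \<in> FD \<Longrightarrow> y \<in> FD \<Longrightarrow> cls (mulp x y) = cls (mulp y x)"
  by (rule cls_eqI) (simp_all add: mulp_dom, simp add: mulp_def algebra_simps)

lemma cls_mult_one: "x \<in> FD \<Longrightarrow> cls (mulp (1,1) x) = cls x"
  by (rule cls_eqI) (simp_all add: mulp_dom one_dom, simp add: mulp_def)

lemma cls_distr: "x \<in> FD \<Longrightarrow> y \<in> FD \<Longrightarrow> z \<in> FD \<Longrightarrow>
    cls (mulp (addp x y) z) = cls (addp (mulp x z) (mulp y z))"
  by (rule cls_eqI) (simp_all add: mulp_dom addp_dom, simp add: mulp_def addp_def algebra_simps)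

lemma neg_dom: "x \<in> FD \<Longrightarrow> (- fst x, snd x) \<in> FD"
proof -
  assume x: "x \<in> FD"
  obtain d where d: "homog d (fst x)" "homog d (snd x)" using frac_domD(4)[OF x] by blast
  show ?thesis using frac_domD[OF x] homog_uminus[OF d(1)] d(2)
    by (intro frac_domI) (auto simp: in_S_uminus)
qed

lemma cls_add_neg: "x \<in> FD \<Longrightarrow> cls (addp (- fst x, snd x) x) = cls (0, 1)"
  by (rule cls_eqI) (simp_all add: addp_dom zero_dom neg_dom, simp add: addp_def)

lemma RR_cring: "cring RR"
proof (rule cringI)
  show "abelian_group RR"
  proof (rule abelian_groupI)
    fix A B assume "A \<in> carrier RR" "B \<in> carrier RR"
    then show "A \<oplus>\<^bsub>RR\<^esub> B \<in> carrier RR"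
      by (elim carrier_E) (simp add: cls_add cls_in addp_dom)
  next
    show "\<zero>\<^bsub>RR\<^esub> \<in> carrier RR" by (simp add: zero_R cls_in zero_dom)
  next
    fix A B C assume "A \<in> carrier RR" "B \<in> carrier RR" "C \<in> carrier RR"
    then show "A \<oplus>\<^bsub>RR\<^esub> B \<oplus>\<^bsub>RR\<^esub> C = A \<oplus>\<^bsub>RR\<^esub> (B \<oplus>\<^bsub>RR\<^esub> C)"
      by (elim carrier_E) (simp add: cls_add addp_dom cls_add_assoc)
  next
    fix A B assume "A \<in> carrier RR" "B \<in> carrier RR"
    then show "A \<oplus>\<^bsub>RR\<^esub> B = B \<oplus>\<^bsub>RR\<^esub> A"
      by (elim carrier_E) (simp add: cls_add cls_add_comm)
  next
    fix A assume "A \<in> carrier RR"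
    then show "\<zero>\<^bsub>RR\<^esub> \<oplus>\<^bsub>RR\<^esub> A = A"
      by (elim carrier_E) (simp add: zero_R cls_add zero_dom cls_add_zero)
  next
    fix A assume "A \<in> carrier RR"
    then show "\<exists>B\<in>carrier RR. B \<oplus>\<^bsub>RR\<^esub> A = \<zero>\<^bsub>RR\<^esub>"
    proof (elim carrier_E)
      fix x assume x: "x \<in> FD" and A: "A = cls x"
      have "cls (- fst x, snd x) \<oplus>\<^bsub>RR\<^esub> A = \<zero>\<^bsub>RR\<^esub>"
        unfolding A zero_R using x by (simp add: cls_add neg_dom cls_add_neg)
      then show ?thesis using cls_in[OF neg_dom[OF x]] by blast
    qed
  qed
next
  show "comm_monoid RR"
  proof (rule comm_monoidI)
    fix A B assume "A \<in> carrier RR" "B \<in> carrier RR"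
    then show "A \<otimes>\<^bsub>RR\<^esub> B \<in> carrier RR"
      by (elim carrier_E) (simp add: cls_mult cls_in mulp_dom)
  next
    show "\<one>\<^bsub>RR\<^esub> \<in> carrier RR" by (simp add: one_R cls_in one_dom)
  next
    fix A B C assume "A \<in> carrier RR" "B \<in> carrier RR" "C \<in> carrier RR"
    then show "A \<otimes>\<^bsub>RR\<^esub> B \<otimes>\<^bsub>RR\<^esub> C = A \<otimes>\<^bsub>RR\<^esub> (B \<otimes>\<^bsub>RR\<^esub> C)"
      by (elim carrier_E) (simp add: cls_mult mulp_dom cls_mult_assoc)
  next
    fix A assume "A \<in> carrier RR"
    then show "\<one>\<^bsub>RR\<^esub> \<otimes>\<^bsub>RR\<^esub> A = A"
      by (elim carrier_E) (simp add: one_R cls_mult one_dom cls_mult_one)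
  next
    fix A B assume "A \<in> carrier RR" "B \<in> carrier RR"
    then show "A \<otimes>\<^bsub>RR\<^esub> B = B \<otimes>\<^bsub>RR\<^esub> A"
      by (elim carrier_E) (simp add: cls_mult cls_mult_comm)
  qed
next
  fix A B C assume "A \<in> carrier RR" "B \<in> carrier RR" "C \<in> carrier RR"
  then show "(A \<oplus>\<^bsub>RR\<^esub> B) \<otimes>\<^bsub>RR\<^esub> C = A \<otimes>\<^bsub>RR\<^esub> C \<oplus>\<^bsub>RR\<^esub> B \<otimes>\<^bsub>RR\<^esub> C"
    by (elim carrier_E) (simp add: cls_mult cls_add mulp_dom addp_dom cls_distr)
qed

end

context cring
begin

lemma sa_mem: "x \<in> I <+>\<^bsub>R\<^esub> J \<longleftrightarrow> (\<exists>i\<in>I. \<exists>j\<in>J. x = i \<oplus> j)"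
  by (auto simp: set_add_def')

lemma sa_memI: "i \<in> I \<Longrightarrow> j \<in> J \<Longrightarrow> x = i \<oplus> j \<Longrightarrow> x \<in> I <+>\<^bsub>R\<^esub> J"
  unfolding sa_mem by blast

lemma sa_mem3: "x \<in> I <+>\<^bsub>R\<^esub> (J <+>\<^bsub>R\<^esub> K) \<longleftrightarrow> (\<exists>i\<in>I. \<exists>j\<in>J. \<exists>k\<in>K. x = i \<oplus> (j \<oplus> k))"
  unfolding set_add_def' by auto

lemma ideal_sub: assumes "ideal I R" shows "I \<subseteq> carrier R"
  using ideal.Icarr[OF assms] by blast

lemma ideal_zero: "ideal J R \<Longrightarrow> \<zero> \<in> J"
  by (simp add: additive_subgroup.zero_closed ideal.axioms(1))

lemma ideal_add: "ideal J R \<Longrightarrow> x \<in> J \<Longrightarrow> y \<in> J \<Longrightarrow> x \<oplus> y \<in> J"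
  by (simp add: additive_subgroup.a_closed ideal.axioms(1))

lemma sa_sub: assumes "ideal K R" "I \<subseteq> K" "J \<subseteq> K" shows "I <+>\<^bsub>R\<^esub> J \<subseteq> K"
proof
  fix x assume "x \<in> I <+>\<^bsub>R\<^esub> J"
  then obtain i j where "i \<in> I" "j \<in> J" "x = i \<oplus> j" unfolding sa_mem by blast
  then show "x \<in> K" using assms ideal_add by blast
qed

lemma sa_left: assumes "ideal J R" "I \<subseteq> carrier R" shows "I \<subseteq> I <+>\<^bsub>R\<^esub> J"
proof
  fix x assume x: "x \<in> I"
  then have "x = x \<oplus> \<zero>" using assms(2) by auto
  then show "x \<in> I <+>\<^bsub>R\<^esub> J" unfolding sa_mem using x ideal_zero[OF assms(1)] by blast
qed

lemma sa_right: assumes "ideal I R" "J \<subseteq> carrier R" shows "J \<subseteq> I <+>\<^bsub>R\<^esub> J"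
proof
  fix x assume x: "x \<in> J"
  then have "x = \<zero> \<oplus> x" using assms(2) by auto
  then show "x \<in> I <+>\<^bsub>R\<^esub> J" unfolding sa_mem using x ideal_zero[OF assms(1)] by blast
qed

lemma sa_mono: "I \<subseteq> I' \<Longrightarrow> J \<subseteq> J' \<Longrightarrow> I <+>\<^bsub>R\<^esub> J \<subseteq> I' <+>\<^bsub>R\<^esub> J'"
  unfolding set_add_def' by blast

lemma ip_mono: assumes "I \<subseteq> I'" "J \<subseteq> J'" shows "ideal_prod R I J \<subseteq> ideal_prod R I' J'"
proof
  fix x assume "x \<in> ideal_prod R I J"
  then show "x \<in> ideal_prod R I' J'"
  proof (induction x rule: ideal_prod.induct)
    case (prod i j)
    then show ?case using assms by (auto intro: ideal_prod.prod)
  next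
    case (sum s1 s2)
    from sum.IH show ?case by (rule ideal_prod.sum)
  qed
qed

lemma ip_le: assumes K: "ideal K R" and h: "\<And>i j. i \<in> I \<Longrightarrow> j \<in> J \<Longrightarrow> i \<otimes> j \<in> K"
  shows "ideal_prod R I J \<subseteq> K"
proof
  fix x assume "x \<in> ideal_prod R I J"
  then show "x \<in> K"
  proof (induction x rule: ideal_prod.induct)
    case (prod i j)
    then show ?case by (rule h)
  next
    case (sum s1 s2)
    from sum.IH show ?case by (rule ideal_add[OF K])
  qed
qed

lemma ip_sub_right: "ideal I R \<Longrightarrow> ideal J R \<Longrightarrow> ideal_prod R I J \<subseteq> J"
  using ideal_prod_inter by blast

lemma ip_sub_left: "ideal I R \<Longrightarrow> ideal J R \<Longrightarrow> ideal_prod R I J \<subseteq> I"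
  using ideal_prod_inter by blast

lemma genideal_insert:
  assumes a: "a \<in> carrier R" and A: "A \<subseteq> carrier R"
  shows "Idl (insert a A) = PIdl a <+>\<^bsub>R\<^esub> Idl A"
proof -
  have ia: "ideal (PIdl a) R" using cgenideal_ideal[OF a] .
  have iA: "ideal (Idl A) R" using genideal_ideal[OF A] .
  have ins: "insert a A \<subseteq> carrier R" using a A by simp
  have i1: "ideal (Idl (insert a A)) R" using genideal_ideal[OF ins] .
  have isum: "ideal (PIdl a <+>\<^bsub>R\<^esub> Idl A) R" using add_ideals[OF ia iA] .
  show ?thesis
  proof
    have "a \<in> PIdl a" using cgenideal_self[OF a] .
    then have 1: "a \<in> PIdl a <+>\<^bsub>R\<^esub> Idl A" by (rule subsetD[OF sa_left[OF iA ideal_sub[OF ia]]])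
    have "A \<subseteq> Idl A" using genideal_self[OF A] .
    then have 2: "A \<subseteq> PIdl a <+>\<^bsub>R\<^esub> Idl A" using sa_right[OF ia ideal_sub[OF iA]] by (rule order.trans)
    from 1 2 have "insert a A \<subseteq> PIdl a <+>\<^bsub>R\<^esub> Idl A" by simp
    then show "Idl (insert a A) \<subseteq> PIdl a <+>\<^bsub>R\<^esub> Idl A"
      by (rule genideal_minimal[OF isum])
  next
    have s: "insert a A \<subseteq> Idl (insert a A)" using genideal_self[OF ins] .
    then have "a \<in> Idl (insert a A)" by simp
    then have 1: "PIdl a \<subseteq> Idl (insert a A)" by (rule cgenideal_minimal[OF i1])
    from s have "A \<subseteq> Idl (insert a A)" by simp
    then have 2: "Idl A \<subseteq> Idl (insert a A)" by (rule genideal_minimal[OF i1])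
    show "PIdl a <+>\<^bsub>R\<^esub> Idl A \<subseteq> Idl (insert a A)" by (rule sa_sub[OF i1 1 2])
  qed
qed

lemma ip_PIdl: assumes I: "ideal I R" and a: "a \<in> carrier R"
  shows "ideal_prod R I (PIdl a) \<subseteq> {b \<otimes> a | b. b \<in> I}"
proof
  fix x assume x: "x \<in> ideal_prod R I (PIdl a)"
  from x show "x \<in> {b \<otimes> a | b. b \<in> I}"
  proof (induction x rule: ideal_prod.induct)
    case (prod i j)
    obtain y where y: "y \<in> carrier R" "j = y \<otimes> a" using prod(2) unfolding cgenideal_def by blast
    have ic: "i \<in> carrier R" using prod(1) ideal.Icarr[OF I] by blast
    have e: "i \<otimes> j = (i \<otimes> y) \<otimes> a" using y ic a by (simp add: m_assoc)
    have iy: "i \<otimes> y \<in> I" using ideal.I_r_closed[OF I prod(1) y(1)] .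
    show ?case unfolding e by (rule CollectI, rule exI[of _ "i \<otimes> y"], simp add: iy)
  next
    case (sum s1 s2)
    obtain b1 where b1: "b1 \<in> I" "s1 = b1 \<otimes> a" using sum.IH(1) by blast
    obtain b2 where b2: "b2 \<in> I" "s2 = b2 \<otimes> a" using sum.IH(2) by blast
    have c: "b1 \<in> carrier R" "b2 \<in> carrier R" using b1 b2 ideal.Icarr[OF I] by auto
    have e: "s1 \<oplus> s2 = (b1 \<oplus> b2) \<otimes> a" using b1(2) b2(2) c a by (simp add: l_distr)
    have bb: "b1 \<oplus> b2 \<in> I" using b1(1) b2(1) by (rule ideal_add[OF I])
    show ?case unfolding e by (rule CollectI, rule exI[of _ "b1 \<oplus> b2"], simp add: bb)
  qed
qed

lemma max_ideal_carrier: "max_ideal R \<subseteq> carrier R"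
  unfolding max_ideal_def by blast

lemma not_max_unit: "x \<in> carrier R \<Longrightarrow> x \<notin> max_ideal R \<Longrightarrow> x \<in> Units R"
  unfolding max_ideal_def by blast

lemma one_not_max: "\<one> \<notin> max_ideal R"
  unfolding max_ideal_def by simp

lemma nakayama:
  assumes Mi: "ideal (max_ideal R) R" and fin: "finite A"
  shows "A \<subseteq> carrier R \<Longrightarrow> ideal N R \<Longrightarrow>
    Idl A \<subseteq> N <+>\<^bsub>R\<^esub> ideal_prod R (max_ideal R) (Idl A) \<Longrightarrow> Idl A \<subseteq> N"
  using fin
proof (induction A arbitrary: N rule: finite_induct)
  case empty
  show ?case by (rule genideal_minimal[OF empty.prems(2)]) simp
next
  case (insert a A N)
  let ?M = "max_ideal R"
  have a: "a \<in> carrier R" and A: "A \<subseteq> carrier R" using insert.prems by auto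
  define P where "P = PIdl a"
  have iP: "ideal P R" unfolding P_def using cgenideal_ideal[OF a] .
  have iA: "ideal (Idl A) R" using genideal_ideal[OF A] .
  have iN: "ideal N R" by fact
  have iNP: "ideal (N <+>\<^bsub>R\<^esub> P) R" using add_ideals[OF iN iP] .
  have ins: "Idl (insert a A) = P <+>\<^bsub>R\<^esub> Idl A" unfolding P_def using genideal_insert[OF a A] .
  have distr: "ideal_prod R ?M (Idl (insert a A)) = ideal_prod R ?M P <+>\<^bsub>R\<^esub> ideal_prod R ?M (Idl A)"
    unfolding ins using ideal_prod_distr(1)[OF Mi iP iA] .
  have MP: "ideal_prod R ?M P \<subseteq> P" using ip_sub_right[OF Mi iP] .
  have "Idl A \<subseteq> (N <+>\<^bsub>R\<^esub> P) <+>\<^bsub>R\<^esub> ideal_prod R ?M (Idl A)"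
  proof
    fix x assume x: "x \<in> Idl A"
    have "x \<in> Idl (insert a A)" unfolding ins using sa_right[OF iP ideal_sub[OF iA]] x by blast
    then have "x \<in> N <+>\<^bsub>R\<^esub> ideal_prod R ?M (Idl (insert a A))"
      by (rule subsetD[OF insert.prems(3)])
    then have "x \<in> N <+>\<^bsub>R\<^esub> (ideal_prod R ?M P <+>\<^bsub>R\<^esub> ideal_prod R ?M (Idl A))"
      by (simp only: distr)
    then obtain n u v where nuv: "n \<in> N" "u \<in> ideal_prod R ?M P" "v \<in> ideal_prod R ?M (Idl A)"
      "x = n \<oplus> (u \<oplus> v)" unfolding sa_mem3 by blast
    have carr: "n \<in> carrier R" "u \<in> carrier R" "v \<in> carrier R"
      using nuv ideal_sub[OF iN] ideal_prod_in_carrier[OF Mi iP] ideal_prod_in_carrier[OF Mi iA] by auto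
    have xe: "x = (n \<oplus> u) \<oplus> v" using nuv(4) carr by (simp add: a_assoc)
    have nu: "n \<oplus> u \<in> N <+>\<^bsub>R\<^esub> P" using nuv(2) MP by (intro sa_memI[OF nuv(1)]) auto
    show "x \<in> (N <+>\<^bsub>R\<^esub> P) <+>\<^bsub>R\<^esub> ideal_prod R ?M (Idl A)"
      by (rule sa_memI[OF nu nuv(3) xe])
  qed
  then have IA: "Idl A \<subseteq> N <+>\<^bsub>R\<^esub> P" using insert.IH[OF A iNP] by blast
  have sub: "Idl (insert a A) \<subseteq> N <+>\<^bsub>R\<^esub> P"
    unfolding ins by (rule sa_sub[OF iNP _ IA]) (rule sa_right[OF iN ideal_sub[OF iP]])
  have "a \<in> Idl (insert a A)" using genideal_self[OF insert.prems(1)] by blast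
  then have "a \<in> N <+>\<^bsub>R\<^esub> ideal_prod R ?M (Idl (insert a A))"
    by (rule subsetD[OF insert.prems(3)])
  then have "a \<in> N <+>\<^bsub>R\<^esub> ideal_prod R ?M (N <+>\<^bsub>R\<^esub> P)"
    by (rule subsetD[OF sa_mono[OF order.refl ip_mono[OF order.refl sub]]])
  then have "a \<in> N <+>\<^bsub>R\<^esub> (ideal_prod R ?M N <+>\<^bsub>R\<^esub> ideal_prod R ?M P)"
    using ideal_prod_distr(1)[OF Mi iN iP] by simp
  then obtain n u w where nuw: "n \<in> N" "u \<in> ideal_prod R ?M N" "w \<in> ideal_prod R ?M P"
      "a = n \<oplus> (u \<oplus> w)" unfolding sa_mem3 by blast
  obtain b where b: "b \<in> ?M" "w = b \<otimes> a" using nuw(3) ip_PIdl[OF Mi a] unfolding P_def by blast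
  have uN: "u \<in> N" using nuw(2) ip_sub_right[OF Mi iN] by blast
  have bc: "b \<in> carrier R" using b(1) max_ideal_carrier by blast
  have nc: "n \<in> carrier R" "u \<in> carrier R" using nuw(1) uN ideal_sub[OF iN] by auto
  have n'N: "n \<oplus> u \<in> N" using nuw(1) uN iN by (simp add: ideal.axioms(1) additive_subgroup.a_closed)
  have eq: "(\<one> \<ominus> b) \<otimes> a = n \<oplus> u"
  proof -
    have "(\<one> \<ominus> b) \<otimes> a = a \<ominus> b \<otimes> a" using a bc by algebra
    also have "\<dots> = n \<oplus> u"
    proof -
      have e1: "a = (n \<oplus> u) \<oplus> b \<otimes> a" using nuw(4) b(2) nc bc a by (simp add: a_assoc)
      have "a \<ominus> b \<otimes> a = ((n \<oplus> u) \<oplus> b \<otimes> a) \<ominus> b \<otimes> a"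
        using arg_cong[OF e1, of "\<lambda>z. z \<ominus> b \<otimes> a"] by simp
      also have "\<dots> = n \<oplus> u" using nc bc a by algebra
      finally show ?thesis .
    qed
    finally show ?thesis .
  qed
  have "\<one> \<ominus> b \<notin> ?M"
  proof
    assume "\<one> \<ominus> b \<in> ?M"
    then have "(\<one> \<ominus> b) \<oplus> b \<in> ?M" using b(1) Mi by (simp add: ideal.axioms(1) additive_subgroup.a_closed)
    moreover have "(\<one> \<ominus> b) \<oplus> b = \<one>" using bc by algebra
    ultimately show False using one_not_max by simp
  qed
  then have un: "\<one> \<ominus> b \<in> Units R" using not_max_unit bc by simp
  have uc: "\<one> \<ominus> b \<in> carrier R" using bc by simp
  have ic: "inv (\<one> \<ominus> b) \<in> carrier R" using Units_inv_closed[OF un] .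
  have "inv (\<one> \<ominus> b) \<otimes> (n \<oplus> u) = inv (\<one> \<ominus> b) \<otimes> ((\<one> \<ominus> b) \<otimes> a)"
    using eq by simp
  also have "\<dots> = (inv (\<one> \<ominus> b) \<otimes> (\<one> \<ominus> b)) \<otimes> a" using ic uc a by (simp add: m_assoc)
  also have "\<dots> = a" using Units_l_inv[OF un] a by simp
  finally have "a = inv (\<one> \<ominus> b) \<otimes> (n \<oplus> u)" by simp
  then have aN: "a \<in> N" using ideal.I_l_closed[OF iN n'N ic] by simp
  have "P \<subseteq> N" unfolding P_def using cgenideal_minimal[OF iN aN] .
  then have "N <+>\<^bsub>R\<^esub> P \<subseteq> N" using sa_sub[OF iN order.refl] by blast
  then show ?case using sub by blast
qed

lemma colon_ideal:
  assumes K: "ideal K R" and a: "a \<in> carrier R"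
  shows "ideal {y \<in> carrier R. a \<otimes> y \<in> K} R"
proof (rule idealI[OF ring_axioms])
  show "subgroup {y \<in> carrier R. a \<otimes> y \<in> K} (add_monoid R)"
  proof (rule add.subgroupI)
    show "{y \<in> carrier R. a \<otimes> y \<in> K} \<subseteq> carrier R" by auto
    have "a \<otimes> \<zero> \<in> K" using a ideal_zero[OF K] by simp
    then show "{y \<in> carrier R. a \<otimes> y \<in> K} \<noteq> {}" by blast
  next
    fix y assume y: "y \<in> {y \<in> carrier R. a \<otimes> y \<in> K}"
    then have yc: "y \<in> carrier R" and ay: "a \<otimes> y \<in> K" by auto
    have "a \<otimes> (\<ominus> y) = \<ominus> (a \<otimes> y)" using a yc by (simp add: r_minus)
    moreover have "\<ominus> (a \<otimes> y) \<in> K"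
      using additive_subgroup.a_inv_closed[OF ideal.axioms(1)[OF K] ay] .
    ultimately have "a \<otimes> (\<ominus> y) \<in> K" by simp
    then show "\<ominus> y \<in> {y \<in> carrier R. a \<otimes> y \<in> K}"
      using yc by simp
  next
    fix y z assume y: "y \<in> {y \<in> carrier R. a \<otimes> y \<in> K}" and z: "z \<in> {y \<in> carrier R. a \<otimes> y \<in> K}"
    then have yc: "y \<in> carrier R" "a \<otimes> y \<in> K" "z \<in> carrier R" "a \<otimes> z \<in> K" by auto
    have "a \<otimes> (y \<oplus> z) = a \<otimes> y \<oplus> a \<otimes> z" using a yc by (simp add: r_distr)
    then have "a \<otimes> (y \<oplus> z) \<in> K" using ideal_add[OF K yc(2) yc(4)] by simp
    then show "y \<oplus> z \<in> {y \<in> carrier R. a \<otimes> y \<in> K}" using yc by simp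
  qed
next
  fix y x assume y: "y \<in> {y \<in> carrier R. a \<otimes> y \<in> K}" and x: "x \<in> carrier R"
  then have yc: "y \<in> carrier R" "a \<otimes> y \<in> K" by auto
  have "a \<otimes> (x \<otimes> y) = x \<otimes> (a \<otimes> y)" using a x yc(1) by (simp add: m_lcomm)
  then have "a \<otimes> (x \<otimes> y) \<in> K" using ideal.I_l_closed[OF K yc(2) x] by simp
  then show "x \<otimes> y \<in> {y \<in> carrier R. a \<otimes> y \<in> K}" using x yc by simp
next
  fix y x assume y: "y \<in> {y \<in> carrier R. a \<otimes> y \<in> K}" and x: "x \<in> carrier R"
  then have yc: "y \<in> carrier R" "a \<otimes> y \<in> K" by auto
  have "a \<otimes> (y \<otimes> x) = (a \<otimes> y) \<otimes> x" using a x yc(1) by (simp add: m_assoc)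
  then have "a \<otimes> (y \<otimes> x) \<in> K" using ideal.I_r_closed[OF K yc(2) x] by simp
  then show "y \<otimes> x \<in> {y \<in> carrier R. a \<otimes> y \<in> K}" using x yc by simp
qed

lemma set_mult_sub: "A \<subseteq> carrier R \<Longrightarrow> B \<subseteq> carrier R \<Longrightarrow> A <#>\<^bsub>R\<^esub> B \<subseteq> carrier R"
  unfolding set_mult_def by auto

lemma set_mult_finite: "finite A \<Longrightarrow> finite B \<Longrightarrow> finite (A <#>\<^bsub>R\<^esub> B)"
  unfolding set_mult_def by auto

lemma ip_genideal:
  assumes A: "A \<subseteq> carrier R" and B: "B \<subseteq> carrier R"
  shows "ideal_prod R (Idl A) (Idl B) = Idl (A <#>\<^bsub>R\<^esub> B)"
proof
  have AB: "A <#>\<^bsub>R\<^esub> B \<subseteq> carrier R" using set_mult_sub[OF A B] .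
  have iAB: "ideal (Idl (A <#>\<^bsub>R\<^esub> B)) R" using genideal_ideal[OF AB] .
  show "ideal_prod R (Idl A) (Idl B) \<subseteq> Idl (A <#>\<^bsub>R\<^esub> B)"
  proof (rule ip_le[OF iAB])
    fix x y assume x: "x \<in> Idl A" and y: "y \<in> Idl B"
    have yc: "y \<in> carrier R" using y ideal_sub[OF genideal_ideal[OF B]] by blast
    have step1: "\<And>a. a \<in> A \<Longrightarrow> Idl B \<subseteq> {y \<in> carrier R. a \<otimes> y \<in> Idl (A <#>\<^bsub>R\<^esub> B)}"
    proof -
      fix a assume a: "a \<in> A"
      have ac: "a \<in> carrier R" using a A by blast
      show "Idl B \<subseteq> {y \<in> carrier R. a \<otimes> y \<in> Idl (A <#>\<^bsub>R\<^esub> B)}"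
      proof (rule genideal_minimal[OF colon_ideal[OF iAB ac]])
        show "B \<subseteq> {y \<in> carrier R. a \<otimes> y \<in> Idl (A <#>\<^bsub>R\<^esub> B)}"
        proof
          fix b assume b: "b \<in> B"
          have "a \<otimes> b \<in> A <#>\<^bsub>R\<^esub> B" unfolding set_mult_def using a b by blast
          then have "a \<otimes> b \<in> Idl (A <#>\<^bsub>R\<^esub> B)" using genideal_self[OF AB] by blast
          then show "b \<in> {y \<in> carrier R. a \<otimes> y \<in> Idl (A <#>\<^bsub>R\<^esub> B)}" using b B by blast
        qed
      qed
    qed
    have "A \<subseteq> {x \<in> carrier R. y \<otimes> x \<in> Idl (A <#>\<^bsub>R\<^esub> B)}"
    proof
      fix a assume a: "a \<in> A"
      have ac: "a \<in> carrier R" using a A by blast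
      have "a \<otimes> y \<in> Idl (A <#>\<^bsub>R\<^esub> B)" using step1[OF a] y by blast
      then show "a \<in> {x \<in> carrier R. y \<otimes> x \<in> Idl (A <#>\<^bsub>R\<^esub> B)}"
        using ac yc by (simp add: m_comm)
    qed
    then have "Idl A \<subseteq> {x \<in> carrier R. y \<otimes> x \<in> Idl (A <#>\<^bsub>R\<^esub> B)}"
      by (rule genideal_minimal[OF colon_ideal[OF iAB yc]])
    then have "y \<otimes> x \<in> Idl (A <#>\<^bsub>R\<^esub> B)" "x \<in> carrier R" using x by auto
    then show "x \<otimes> y \<in> Idl (A <#>\<^bsub>R\<^esub> B)" using yc by (simp add: m_comm)
  qed
next
  have iA: "ideal (Idl A) R" using genideal_ideal[OF A] .
  have iB: "ideal (Idl B) R" using genideal_ideal[OF B] .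
  have "A <#>\<^bsub>R\<^esub> B \<subseteq> ideal_prod R (Idl A) (Idl B)"
  proof
    fix z assume "z \<in> A <#>\<^bsub>R\<^esub> B"
    then obtain a b where ab: "a \<in> A" "b \<in> B" "z = a \<otimes> b" unfolding set_mult_def by blast
    have "a \<in> Idl A" using ab(1) genideal_self[OF A] by blast
    moreover have "b \<in> Idl B" using ab(2) genideal_self[OF B] by blast
    ultimately show "z \<in> ideal_prod R (Idl A) (Idl B)" using ab(3) by (simp add: ideal_prod.prod)
  qed
  then show "Idl (A <#>\<^bsub>R\<^esub> B) \<subseteq> ideal_prod R (Idl A) (Idl B)"
    by (rule genideal_minimal[OF ideal_prod_is_ideal[OF iA iB]])
qed

lemma ideal_pow_ideal: "ideal I R \<Longrightarrow> ideal (ideal_pow R I k) R"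
  by (induction k) (simp_all add: oneideal ideal_prod_is_ideal)

lemma ideal_pow_fg:
  assumes B: "finite B" "B \<subseteq> carrier R"
  shows "\<exists>A. finite A \<and> A \<subseteq> carrier R \<and> ideal_pow R (Idl B) k = Idl A"
proof (induction k)
  case 0
  show ?case by (rule exI[of _ "{\<one>}"]) (simp add: genideal_one)
next
  case (Suc k)
  then obtain A where A: "finite A" "A \<subseteq> carrier R" "ideal_pow R (Idl B) k = Idl A" by blast
  have "ideal_pow R (Idl B) (Suc k) = Idl (B <#>\<^bsub>R\<^esub> A)"
    using A(3) ip_genideal[OF B(2) A(2)] by simp
  then show ?case using set_mult_finite[OF B(1) A(1)] set_mult_sub[OF B(2) A(2)] by blast
qed

lemma genideal_mono: "A \<subseteq> B \<Longrightarrow> B \<subseteq> carrier R \<Longrightarrow> Idl A \<subseteq> Idl B"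
  by (rule genideal_minimal[OF genideal_ideal]) (auto dest: genideal_self)

lemma ideal_minus: "ideal J R \<Longrightarrow> x \<in> J \<Longrightarrow> y \<in> J \<Longrightarrow> x \<ominus> y \<in> J"
  unfolding a_minus_def
  by (rule ideal_add, assumption+, rule additive_subgroup.a_inv_closed[OF ideal.axioms(1)])

lemma red_transfer:
  assumes Mi: "ideal (max_ideal R) R" and B: "finite B" "B \<subseteq> carrier R" "max_ideal R = Idl B"
    and red: "is_reduction_of_max R K2"
    and F': "finite F'" "F' \<subseteq> max_ideal R"
    and K: "ideal K R" "K \<subseteq> max_ideal R"
    and sub: "K2 \<subseteq> Idl F' <+>\<^bsub>R\<^esub> ideal_prod R (max_ideal R) K"
  shows "is_reduction_of_max R (Idl F')"
proof -
  let ?M = "max_ideal R"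
  have F'c: "F' \<subseteq> carrier R" using F'(2) max_ideal_carrier by blast
  have iF: "ideal (Idl F') R" using genideal_ideal[OF F'c] .
  have FM: "Idl F' \<subseteq> ?M" using genideal_minimal[OF Mi F'(2)] .
  have iK2: "ideal K2 R" using red unfolding is_reduction_of_max_def by blast
  obtain k where e: "ideal_pow R ?M (Suc k) = ideal_prod R K2 (ideal_pow R ?M k)"
    using red unfolding is_reduction_of_max_def by blast
  define Q where "Q = ideal_pow R ?M k"
  define P where "P = ideal_pow R ?M (Suc k)"
  have iQ: "ideal Q R" unfolding Q_def using ideal_pow_ideal[OF Mi] .
  have iP: "ideal P R" unfolding P_def using ideal_pow_ideal[OF Mi] .
  have PMQ: "P = ideal_prod R ?M Q" unfolding P_def Q_def by simp
  have iMK: "ideal (ideal_prod R ?M K) R" using ideal_prod_is_ideal[OF Mi K(1)] .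
  have "P = ideal_prod R K2 Q" unfolding P_def Q_def using e .
  also have "\<dots> \<subseteq> ideal_prod R (Idl F' <+>\<^bsub>R\<^esub> ideal_prod R ?M K) Q"
    using ip_mono[OF sub order.refl] .
  also have "\<dots> = ideal_prod R (Idl F') Q <+>\<^bsub>R\<^esub> ideal_prod R (ideal_prod R ?M K) Q"
    using ideal_prod_distr(2)[OF iQ iF iMK] .
  also have "ideal_prod R (ideal_prod R ?M K) Q = ideal_prod R ?M (ideal_prod R K Q)"
    using ideal_prod_assoc[OF Mi K(1) iQ] .
  also have "ideal_prod R ?M (ideal_prod R K Q) \<subseteq> ideal_prod R ?M P"
    unfolding PMQ using ip_mono[OF order.refl ip_mono[OF K(2) order.refl]] .
  finally have Psub: "P \<subseteq> ideal_prod R (Idl F') Q <+>\<^bsub>R\<^esub> ideal_prod R ?M P"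
    using sa_mono[OF order.refl] by blast
  obtain A where A: "finite A" "A \<subseteq> carrier R" "ideal_pow R (Idl B) (Suc k) = Idl A"
    using ideal_pow_fg[OF B(1) B(2)] by blast
  have PA: "P = Idl A" unfolding P_def using A(3) B(3) by simp
  have iFQ: "ideal (ideal_prod R (Idl F') Q) R" using ideal_prod_is_ideal[OF iF iQ] .
  have "P \<subseteq> ideal_prod R (Idl F') Q"
    using nakayama[OF Mi A(1) A(2) iFQ] Psub unfolding PA by blast
  moreover have "ideal_prod R (Idl F') Q \<subseteq> P" unfolding PMQ using ip_mono[OF FM order.refl] .
  ultimately have "P = ideal_prod R (Idl F') Q" by blast
  then show ?thesis unfolding is_reduction_of_max_def P_def Q_def using iF FM by blast
qed

lemma claim:
  assumes Mi: "ideal (max_ideal R) R" and iN: "ideal N R"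
  shows "set F \<subseteq> carrier R \<Longrightarrow> ideal_prod R (max_ideal R) (Idl (set F)) \<subseteq> N \<Longrightarrow>
    ideal K2 R \<Longrightarrow> K2 \<subseteq> Idl (set F) <+>\<^bsub>R\<^esub> N \<Longrightarrow>
    \<exists>F'. finite F' \<and> F' \<subseteq> K2 \<and> K2 \<subseteq> Idl F' <+>\<^bsub>R\<^esub> N \<and> card F' \<le> length F \<and>
         (\<not> Idl (set F) \<subseteq> K2 <+>\<^bsub>R\<^esub> N \<longrightarrow> card F' < length F)"
proof (induction F arbitrary: K2)
  case Nil
  have "Idl {} \<subseteq> K2 <+>\<^bsub>R\<^esub> N" by (rule genideal_minimal[OF add_ideals[OF Nil.prems(3) iN]]) simp
  then show ?case using Nil.prems(4) by (intro exI[of _ "{}"]) simp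
next
  case (Cons f G K2)
  let ?M = "max_ideal R"
  have f: "f \<in> carrier R" and Gc: "set G \<subseteq> carrier R" using Cons.prems(1) by auto
  define W where "W = Idl (set (f # G))"
  have Wi: "W = PIdl f <+>\<^bsub>R\<^esub> Idl (set G)" unfolding W_def using genideal_insert[OF f Gc] by simp
  have iW: "ideal W R" unfolding W_def using genideal_ideal[OF Cons.prems(1)] .
  have iG: "ideal (Idl (set G)) R" using genideal_ideal[OF Gc] .
  have iPf: "ideal (PIdl f) R" using cgenideal_ideal[OF f] .
  have GW: "Idl (set G) \<subseteq> W" unfolding W_def using genideal_mono[OF _ Cons.prems(1)] by auto
  have MW: "ideal_prod R ?M W \<subseteq> N" using Cons.prems(2) unfolding W_def .
  have MG: "ideal_prod R ?M (Idl (set G)) \<subseteq> N" using ip_mono[OF order.refl GW] MW by blast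
  have iK2: "ideal K2 R" by fact
  have K2W: "K2 \<subseteq> W <+>\<^bsub>R\<^esub> N" using Cons.prems(4) unfolding W_def .
  have Nc: "N \<subseteq> carrier R" using ideal_sub[OF iN] .
  have Gsub: "Idl (set G) \<subseteq> carrier R" using ideal_sub[OF iG] .
  have dec: "\<And>k. k \<in> K2 \<Longrightarrow> \<exists>c g n. c \<in> carrier R \<and> g \<in> Idl (set G) \<and> n \<in> N \<and> k = c \<otimes> f \<oplus> g \<oplus> n"
  proof -
    fix k assume "k \<in> K2"
    then have "k \<in> W <+>\<^bsub>R\<^esub> N" using K2W by blast
    then obtain w n where wn: "w \<in> W" "n \<in> N" "k = w \<oplus> n" unfolding sa_mem by blast
    from wn(1) obtain x g where xg: "x \<in> PIdl f" "g \<in> Idl (set G)" "w = x \<oplus> g" unfolding Wi sa_mem by blast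
    from xg(1) obtain c where c: "c \<in> carrier R" "x = c \<otimes> f" unfolding cgenideal_def by blast
    show "\<exists>c g n. c \<in> carrier R \<and> g \<in> Idl (set G) \<and> n \<in> N \<and> k = c \<otimes> f \<oplus> g \<oplus> n"
      using c xg wn by blast
  qed
  show ?case
  proof (cases "\<exists>k c g n. k \<in> K2 \<and> c \<in> Units R \<and> g \<in> Idl (set G) \<and> n \<in> N \<and> k = c \<otimes> f \<oplus> g \<oplus> n")
    case True
    then obtain k c g n where kc: "k \<in> K2" "c \<in> Units R" "g \<in> Idl (set G)" "n \<in> N" "k = c \<otimes> f \<oplus> g \<oplus> n"
      by blast
    have cc: "c \<in> carrier R" using kc(2) by (rule Units_closed)
    have cic: "inv c \<in> carrier R" using Units_inv_closed[OF kc(2)] .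
    have gc: "g \<in> carrier R" using kc(3) Gsub by blast
    have nc: "n \<in> carrier R" using kc(4) Nc by blast
    have kcar: "k \<in> carrier R" using kc(1) ideal_sub[OF iK2] by blast
    define K3 where "K3 = K2 \<inter> (Idl (set G) <+>\<^bsub>R\<^esub> N)"
    have iK3: "ideal K3 R" unfolding K3_def using i_intersect[OF iK2 add_ideals[OF iG iN]] .
    have K3sub: "K3 \<subseteq> Idl (set G) <+>\<^bsub>R\<^esub> N" unfolding K3_def by blast
    obtain F'' where F'': "finite F''" "F'' \<subseteq> K3" "K3 \<subseteq> Idl F'' <+>\<^bsub>R\<^esub> N" "card F'' \<le> length G"
      "\<not> Idl (set G) \<subseteq> K3 <+>\<^bsub>R\<^esub> N \<longrightarrow> card F'' < length G"
      using Cons.IH[OF Gc MG iK3 K3sub] by blast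
    define F' where "F' = insert k F''"
    have F'fin: "finite F'" unfolding F'_def using F''(1) by simp
    have F'sub: "F' \<subseteq> K2" unfolding F'_def using kc(1) F''(2) unfolding K3_def by blast
    have F'c: "F' \<subseteq> carrier R" using F'sub ideal_sub[OF iK2] by blast
    have iF': "ideal (Idl F') R" using genideal_ideal[OF F'c] .
    have kF': "k \<in> Idl F'" using genideal_self[OF F'c] unfolding F'_def by blast
    have F''F': "Idl F'' \<subseteq> Idl F'" using genideal_mono[OF _ F'c] unfolding F'_def by blast
    have card1: "card F' \<le> Suc (card F'')" unfolding F'_def by (rule card_insert_le_m1) auto
    have cover: "K2 \<subseteq> Idl F' <+>\<^bsub>R\<^esub> N"
    proof
      fix k2 assume k2: "k2 \<in> K2"
      obtain c2 g2 n2 where d2: "c2 \<in> carrier R" "g2 \<in> Idl (set G)" "n2 \<in> N" "k2 = c2 \<otimes> f \<oplus> g2 \<oplus> n2"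
        using dec[OF k2] by blast
      have g2c: "g2 \<in> carrier R" using d2(2) Gsub by blast
      have n2c: "n2 \<in> carrier R" using d2(3) Nc by blast
      define e where "e = c2 \<otimes> inv c"
      have ec: "e \<in> carrier R" unfolding e_def using d2(1) cic by simp
      have h: "c2 \<otimes> f = e \<otimes> (c \<otimes> f)"
      proof -
        have "e \<otimes> (c \<otimes> f) = c2 \<otimes> ((inv c \<otimes> c) \<otimes> f)" unfolding e_def using d2(1) cic cc f
          by (simp add: m_assoc)
        also have "\<dots> = c2 \<otimes> f" using Units_l_inv[OF kc(2)] f by simp
        finally show ?thesis by simp
      qed
      define d where "d = k2 \<ominus> e \<otimes> k"
      have dK2: "d \<in> K2" unfolding d_def using ideal_minus[OF iK2 k2 ideal.I_l_closed[OF iK2 kc(1) ec]] .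
      have "d = (e \<otimes> (c \<otimes> f) \<oplus> g2 \<oplus> n2) \<ominus> e \<otimes> (c \<otimes> f \<oplus> g \<oplus> n)"
        unfolding d_def d2(4) kc(5) h ..
      also have "\<dots> = (g2 \<ominus> e \<otimes> g) \<oplus> (n2 \<ominus> e \<otimes> n)"
        using ec cc f gc nc g2c n2c by algebra
      finally have dform: "d = (g2 \<ominus> e \<otimes> g) \<oplus> (n2 \<ominus> e \<otimes> n)" .
      have "g2 \<ominus> e \<otimes> g \<in> Idl (set G)" using ideal_minus[OF iG d2(2) ideal.I_l_closed[OF iG kc(3) ec]] .
      moreover have "n2 \<ominus> e \<otimes> n \<in> N" using ideal_minus[OF iN d2(3) ideal.I_l_closed[OF iN kc(4) ec]] .
      ultimately have "d \<in> Idl (set G) <+>\<^bsub>R\<^esub> N" using dform by (intro sa_memI) 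
      then have "d \<in> K3" unfolding K3_def using dK2 by blast
      then have "d \<in> Idl F'' <+>\<^bsub>R\<^esub> N" using F''(3) by blast
      then obtain h3 n3 where hn: "h3 \<in> Idl F''" "n3 \<in> N" "d = h3 \<oplus> n3" unfolding sa_mem by blast
      have h3c: "h3 \<in> carrier R" using hn(1) F''F' ideal_sub[OF iF'] by blast
      have n3c: "n3 \<in> carrier R" using hn(2) Nc by blast
      have k2c: "k2 \<in> carrier R" using k2 ideal_sub[OF iK2] by blast
      have "k2 = d \<oplus> e \<otimes> k" unfolding d_def using k2c ec kcar by algebra
      also have "\<dots> = (h3 \<oplus> e \<otimes> k) \<oplus> n3" unfolding hn(3) using h3c n3c ec kcar by algebra
      finally have k2e: "k2 = (h3 \<oplus> e \<otimes> k) \<oplus> n3" .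
      have "h3 \<oplus> e \<otimes> k \<in> Idl F'"
        using ideal_add[OF iF' subsetD[OF F''F' hn(1)] ideal.I_l_closed[OF iF' kF' ec]] .
      then show "k2 \<in> Idl F' <+>\<^bsub>R\<^esub> N" by (rule sa_memI[OF _ hn(2) k2e])
    qed
    have strict: "\<not> W \<subseteq> K2 <+>\<^bsub>R\<^esub> N \<Longrightarrow> card F' < length (f # G)"
    proof -
      assume nW: "\<not> W \<subseteq> K2 <+>\<^bsub>R\<^esub> N"
      have "\<not> Idl (set G) \<subseteq> K3 <+>\<^bsub>R\<^esub> N"
      proof
        assume GK3: "Idl (set G) \<subseteq> K3 <+>\<^bsub>R\<^esub> N"
        have iKN: "ideal (K2 <+>\<^bsub>R\<^esub> N) R" using add_ideals[OF iK2 iN] .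
        have K3K2: "K3 \<subseteq> K2" unfolding K3_def by blast
        have GKN: "Idl (set G) \<subseteq> K2 <+>\<^bsub>R\<^esub> N" using GK3 sa_mono[OF K3K2 order.refl] by blast
        have "k \<in> K2 <+>\<^bsub>R\<^esub> N" using kc(1) sa_left[OF iN ideal_sub[OF iK2]] by blast
        moreover have "g \<in> K2 <+>\<^bsub>R\<^esub> N" using kc(3) GKN by blast
        moreover have "n \<in> K2 <+>\<^bsub>R\<^esub> N" using kc(4) sa_right[OF iK2 Nc] by blast
        ultimately have "k \<ominus> (g \<oplus> n) \<in> K2 <+>\<^bsub>R\<^esub> N"
          using ideal_minus[OF iKN] ideal_add[OF iKN] by blast
        moreover have "k \<ominus> (g \<oplus> n) = c \<otimes> f" unfolding kc(5) using cc f gc nc by algebra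
        ultimately have "c \<otimes> f \<in> K2 <+>\<^bsub>R\<^esub> N" by simp
        then have "inv c \<otimes> (c \<otimes> f) \<in> K2 <+>\<^bsub>R\<^esub> N" using ideal.I_l_closed[OF iKN _ cic] by blast
        moreover have "inv c \<otimes> (c \<otimes> f) = f"
          using Units_l_inv[OF kc(2)] cic cc f by (simp add: m_assoc[symmetric])
        ultimately have "f \<in> K2 <+>\<^bsub>R\<^esub> N" by simp
        then have "PIdl f \<subseteq> K2 <+>\<^bsub>R\<^esub> N" by (rule cgenideal_minimal[OF iKN])
        then have "W \<subseteq> K2 <+>\<^bsub>R\<^esub> N" unfolding Wi using sa_sub[OF iKN _ GKN] by blast
        then show False using nW by blast
      qed
      then have "card F'' < length G" using F''(5) by blast
      then show "card F' < length (f # G)" using card1 by simp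
    qed
    show ?thesis
      using F'fin F'sub cover card1 F''(4) strict unfolding W_def by (intro exI[of _ F']) auto
  next
    case False
    have K2G: "K2 \<subseteq> Idl (set G) <+>\<^bsub>R\<^esub> N"
    proof
      fix k assume k: "k \<in> K2"
      obtain c g n where d: "c \<in> carrier R" "g \<in> Idl (set G)" "n \<in> N" "k = c \<otimes> f \<oplus> g \<oplus> n"
        using dec[OF k] by blast
      have "c \<notin> Units R" using False k d by blast
      then have cM: "c \<in> ?M" unfolding max_ideal_def using d(1) by blast
      have fW: "f \<in> W" unfolding W_def using genideal_self[OF Cons.prems(1)] by simp
      have "c \<otimes> f \<in> ideal_prod R ?M W" using cM fW by (rule ideal_prod.prod)
      then have cfN: "c \<otimes> f \<in> N" using MW by blast
      have gc: "g \<in> carrier R" using d(2) Gsub by blast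
      have nc: "n \<in> carrier R" using d(3) Nc by blast
      have "k = g \<oplus> (c \<otimes> f \<oplus> n)" unfolding d(4) using d(1) f gc nc by algebra
      then show "k \<in> Idl (set G) <+>\<^bsub>R\<^esub> N" by (rule sa_memI[OF d(2) ideal_add[OF iN cfN d(3)]])
    qed
    obtain F' where F': "finite F'" "F' \<subseteq> K2" "K2 \<subseteq> Idl F' <+>\<^bsub>R\<^esub> N" "card F' \<le> length G"
      using Cons.IH[OF Gc MG iK2 K2G] by blast
    then show ?thesis by (intro exI[of _ F']) auto
  qed
qed

theorem exists_min_red:
  assumes Mi: "ideal (max_ideal R) R" and B: "finite B" "B \<subseteq> carrier R" "max_ideal R = Idl B"
    and G0: "finite G0" "G0 \<subseteq> carrier R" and red0: "is_reduction_of_max R (Idl G0)"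
  shows "\<exists>J. is_minimal_reduction_of_max R J \<and> J \<subseteq> Idl G0"
proof -
  let ?M = "max_ideal R"
  let ?J0 = "Idl G0"
  define Pn where "Pn n = (\<exists>F. finite F \<and> F \<subseteq> ?J0 \<and> card F = n \<and> is_reduction_of_max R (Idl F))" for n
  have "Pn (card G0)" unfolding Pn_def using G0 genideal_self[OF G0(2)] red0 by blast
  then have Pt: "Pn (LEAST n. Pn n)" by (rule LeastI)
  define t where "t = (LEAST n. Pn n)"
  obtain F where F: "finite F" "F \<subseteq> ?J0" "card F = t" "is_reduction_of_max R (Idl F)"
    using Pt unfolding Pn_def t_def by blast
  have J0c: "?J0 \<subseteq> carrier R" using ideal_sub[OF genideal_ideal[OF G0(2)]] .
  have Fc: "F \<subseteq> carrier R" using F(2) J0c by blast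
  have iJ0: "ideal ?J0 R" using genideal_ideal[OF G0(2)] .
  have KJ0: "Idl F \<subseteq> ?J0" using genideal_minimal[OF iJ0 F(2)] .
  have iK: "ideal (Idl F) R" using genideal_ideal[OF Fc] .
  have KM: "Idl F \<subseteq> ?M" using F(4) unfolding is_reduction_of_max_def by blast
  have "is_minimal_reduction_of_max R (Idl F)"
    unfolding is_minimal_reduction_of_max_def
  proof (intro conjI allI impI)
    show "is_reduction_of_max R (Idl F)" by (rule F(4))
    fix J' assume J': "is_reduction_of_max R J' \<and> J' \<subseteq> Idl F"
    have iJ': "ideal J' R" and J'M: "J' \<subseteq> ?M" using J' unfolding is_reduction_of_max_def by blast+
    obtain Fl where Fl: "set Fl = F" "distinct Fl" using finite_distinct_list[OF F(1)] by blast
    have lenFl: "length Fl = card F" using distinct_card[OF Fl(2)] Fl(1) by simp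
    define N where "N = ideal_prod R ?M (Idl F)"
    have iN: "ideal N R" unfolding N_def using ideal_prod_is_ideal[OF Mi iK] .
    have J'sub: "J' \<subseteq> Idl (set Fl) <+>\<^bsub>R\<^esub> N"
      unfolding Fl(1) using J' sa_left[OF iN ideal_sub[OF iK]] by blast
    obtain F' where F': "finite F'" "F' \<subseteq> J'" "J' \<subseteq> Idl F' <+>\<^bsub>R\<^esub> N" "card F' \<le> length Fl"
        "\<not> Idl (set Fl) \<subseteq> J' <+>\<^bsub>R\<^esub> N \<longrightarrow> card F' < length Fl"
      using claim[OF Mi iN _ _ iJ' J'sub] Fc Fl(1) unfolding N_def by blast
    show "J' = Idl F"
    proof (cases "Idl F \<subseteq> J' <+>\<^bsub>R\<^esub> N")
      case True
      then have "Idl F \<subseteq> J'" using nakayama[OF Mi F(1) Fc iJ'] unfolding N_def by blast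
      then show ?thesis using J' by blast
    next
      case False
      then have lt: "card F' < t" using F'(5) Fl(1) lenFl F(3) by simp
      have F'M: "F' \<subseteq> ?M" using F'(2) J'M by blast
      have "is_reduction_of_max R (Idl F')"
        using red_transfer[OF Mi B J'[THEN conjunct1] F'(1) F'M iK KM] F'(3) unfolding N_def by blast
      moreover have "F' \<subseteq> ?J0" using F'(2) J' KJ0 by blast
      ultimately have "Pn (card F')" unfolding Pn_def using F'(1) by blast
      then have "t \<le> card F'" unfolding t_def by (rule Least_le)
      then show ?thesis using lt by simp
    qed
  qed
  then show ?thesis using KJ0 by blast
qed

end

lemma Cst_zero [simp]: "Cst 0 = 0" unfolding Cst_def by simp
lemma Cst_add: "Cst (a + b) = Cst a + Cst b" unfolding Cst_def by (simp add: single_add)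

locale loc0 = loc +
  assumes I_van: "\<And>f. f \<in> I \<Longrightarrow> mpoly_eval f p = 0"
begin

definition val :: "(mpoly \<times> mpoly) set \<Rightarrow> complex" where
  "val A = mpoly_eval (fst (frac_rep A)) p / mpoly_eval (snd (frac_rep A)) p"

definition emb :: "complex \<Rightarrow> (mpoly \<times> mpoly) set" where
  "emb c = cls (Cst c, 1)"

lemma cst_dom: "(Cst c, 1) \<in> FD"
  by (rule frac_domI[where d=0]) auto

lemma emb_in: "emb c \<in> carrier RR"
  unfolding emb_def using cls_in[OF cst_dom] .

lemma val_cls: assumes x: "x \<in> FD" shows "val (cls x) = mpoly_eval (fst x) p / mpoly_eval (snd x) p"
proof -
  define y where "y = frac_rep (cls x)"
  have e: "EQ x y" unfolding y_def using rep_eq[OF x] .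
  have y: "y \<in> FD" unfolding y_def using rep_dom[OF x] .
  obtain s d where s: "in_S r s" "mpoly_eval s p \<noteq> 0" "s * (fst x * snd y - fst y * snd x) \<in> I"
    using e unfolding eqv_def by blast
  have "mpoly_eval (s * (fst x * snd y - fst y * snd x)) p = 0" using I_van[OF s(3)] .
  then have "mpoly_eval (fst x) p * mpoly_eval (snd y) p = mpoly_eval (fst y) p * mpoly_eval (snd x) p"
    using s(2) by (simp add: mpoly_eval_mult mpoly_eval_diff)
  moreover have "mpoly_eval (snd x) p \<noteq> 0" "mpoly_eval (snd y) p \<noteq> 0"
    using frac_domD(3)[OF x] frac_domD(3)[OF y] by auto
  ultimately show ?thesis unfolding val_def y_def[symmetric] by (simp add: field_simps)
qed

lemma val_mult: "A \<in> carrier RR \<Longrightarrow> B \<in> carrier RR \<Longrightarrow> val (A \<otimes>\<^bsub>RR\<^esub> B) = val A * val B"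
  by (elim carrier_E) (simp add: cls_mult mulp_dom val_cls, simp add: mulp_def mpoly_eval_mult)

lemma val_add: "A \<in> carrier RR \<Longrightarrow> B \<in> carrier RR \<Longrightarrow> val (A \<oplus>\<^bsub>RR\<^esub> B) = val A + val B"
proof (elim carrier_E)
  fix x y assume x: "x \<in> FD" and y: "y \<in> FD" and A: "A = cls x" and B: "B = cls y"
  have "mpoly_eval (snd x) p \<noteq> 0" "mpoly_eval (snd y) p \<noteq> 0"
    using frac_domD(3)[OF x] frac_domD(3)[OF y] by auto
  then show ?thesis unfolding A B using x y
    by (simp add: cls_add addp_dom val_cls, simp add: addp_def mpoly_eval_mult mpoly_eval_add field_simps)
qed

lemma val_one: "val \<one>\<^bsub>RR\<^esub> = 1"
  unfolding one_R using val_cls[OF one_dom] by simp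

lemma val_zero: "val \<zero>\<^bsub>RR\<^esub> = 0"
  unfolding zero_R using val_cls[OF zero_dom] by simp

lemma val_emb: "val (emb c) = c"
  unfolding emb_def using val_cls[OF cst_dom] by simp

lemma val_neg: "A \<in> carrier RR \<Longrightarrow> val (\<ominus>\<^bsub>RR\<^esub> A) = - val A"
proof -
  assume A: "A \<in> carrier RR"
  interpret C: cring RR by (rule RR_cring)
  have "val (A \<oplus>\<^bsub>RR\<^esub> \<ominus>\<^bsub>RR\<^esub> A) = 0" using C.r_neg[OF A] val_zero by simp
  then show ?thesis using val_add[OF A C.a_inv_closed[OF A]] by (simp add: add_eq_0_iff)
qed

lemma emb_add: "emb (a + b) = emb a \<oplus>\<^bsub>RR\<^esub> emb b"
proof -
  have "emb a \<oplus>\<^bsub>RR\<^esub> emb b = cls (addp (Cst a, 1) (Cst b, 1))"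
    unfolding emb_def by (rule cls_add[OF cst_dom cst_dom])
  also have "\<dots> = cls (Cst (a + b), 1)"
    by (rule cls_eqI[OF addp_dom[OF cst_dom cst_dom] cst_dom]) (simp add: addp_def Cst_add)
  finally show ?thesis unfolding emb_def by simp
qed

lemma emb_mult: "emb (a * b) = emb a \<otimes>\<^bsub>RR\<^esub> emb b"
proof -
  have "emb a \<otimes>\<^bsub>RR\<^esub> emb b = cls (mulp (Cst a, 1) (Cst b, 1))"
    unfolding emb_def by (rule cls_mult[OF cst_dom cst_dom])
  also have "\<dots> = cls (Cst (a * b), 1)"
    by (rule cls_eqI[OF mulp_dom[OF cst_dom cst_dom] cst_dom]) (simp add: mulp_def Cst_mult)
  finally show ?thesis unfolding emb_def by simp
qed

lemma emb_zero: "emb 0 = \<zero>\<^bsub>RR\<^esub>"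
  unfolding emb_def zero_R by simp

lemma emb_one: "emb 1 = \<one>\<^bsub>RR\<^esub>"
  unfolding emb_def one_R by simp

lemma units_iff: assumes A: "A \<in> carrier RR" shows "A \<in> Units RR \<longleftrightarrow> val A \<noteq> 0"
proof
  assume "A \<in> Units RR"
  then obtain B where B: "B \<in> carrier RR" "B \<otimes>\<^bsub>RR\<^esub> A = \<one>\<^bsub>RR\<^esub>" unfolding Units_def by blast
  then have "val B * val A = 1" using val_mult[OF B(1) A] val_one by simp
  then show "val A \<noteq> 0" by auto
next
  assume v: "val A \<noteq> 0"
  from A obtain x where x: "x \<in> FD" and Ax: "A = cls x" by (elim carrier_E)
  have fx: "mpoly_eval (fst x) p \<noteq> 0" using v val_cls[OF x] Ax by simp
  obtain d where d: "homog d (fst x)" "homog d (snd x)" using frac_domD(4)[OF x] by blast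
  have x': "(snd x, fst x) \<in> FD" using frac_domD[OF x] fx d by (intro frac_domI) auto
  have e1: "cls x \<otimes>\<^bsub>RR\<^esub> cls (snd x, fst x) = \<one>\<^bsub>RR\<^esub>"
    unfolding one_R cls_mult[OF x x'] 
    by (rule cls_eqI[OF mulp_dom[OF x x'] one_dom]) (simp add: mulp_def mult.commute)
  have e2: "cls (snd x, fst x) \<otimes>\<^bsub>RR\<^esub> cls x = \<one>\<^bsub>RR\<^esub>"
    unfolding one_R cls_mult[OF x' x] 
    by (rule cls_eqI[OF mulp_dom[OF x' x] one_dom]) (simp add: mulp_def mult.commute)
  show "A \<in> Units RR" unfolding Units_def Ax using e1 e2 cls_in[OF x] cls_in[OF x'] by blast
qed

lemma max_ideal_val: "max_ideal RR = {A \<in> carrier RR. val A = 0}"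
  unfolding max_ideal_def using units_iff by blast

lemma one_ne_zero: "\<one>\<^bsub>RR\<^esub> \<noteq> \<zero>\<^bsub>RR\<^esub>"
  using val_one val_zero by force

lemma max_ideal_ideal: "ideal (max_ideal RR) RR"
proof -
  interpret C: cring RR by (rule RR_cring)
  show ?thesis unfolding max_ideal_val
  proof (rule idealI[OF C.ring_axioms])
    show "subgroup {A \<in> carrier RR. val A = 0} (add_monoid RR)"
    proof (rule C.add.subgroupI)
      show "{A \<in> carrier RR. val A = 0} \<subseteq> carrier RR" by auto
      show "{A \<in> carrier RR. val A = 0} \<noteq> {}" using val_zero C.zero_closed by blast
    next
      fix A assume "A \<in> {A \<in> carrier RR. val A = 0}"
      then show "\<ominus>\<^bsub>RR\<^esub> A \<in> {A \<in> carrier RR. val A = 0}" by (simp add: val_neg)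
    next
      fix A B assume "A \<in> {A \<in> carrier RR. val A = 0}" "B \<in> {A \<in> carrier RR. val A = 0}"
      then show "A \<oplus>\<^bsub>RR\<^esub> B \<in> {A \<in> carrier RR. val A = 0}" by (simp add: val_add)
    qed
  next
    fix A X assume "A \<in> {A \<in> carrier RR. val A = 0}" "X \<in> carrier RR"
    then show "X \<otimes>\<^bsub>RR\<^esub> A \<in> {A \<in> carrier RR. val A = 0}" by (simp add: val_mult)
  next
    fix A X assume "A \<in> {A \<in> carrier RR. val A = 0}" "X \<in> carrier RR"
    then show "A \<otimes>\<^bsub>RR\<^esub> X \<in> {A \<in> carrier RR. val A = 0}" by (simp add: val_mult)
  qed
qed

end

lemma mon_deg_zero_iff: "mon_deg a = 0 \<Longrightarrow> a = 0"
proof -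
  assume "mon_deg a = 0"
  then have "\<forall>i\<in>Poly_Mapping.keys a. Poly_Mapping.lookup a i = 0" unfolding mon_deg_def by simp
  then have "\<forall>i. Poly_Mapping.lookup a i = 0" by (metis in_keys_iff)
  then show "a = 0" by (intro poly_mapping_eqI) simp
qed

lemma mon_decomp:
  fixes a :: "nat \<Rightarrow>\<^sub>0 nat"
  assumes j: "j \<in> Poly_Mapping.keys a"
  shows "a = (a - Poly_Mapping.single j 1) + Poly_Mapping.single j 1"
    "Poly_Mapping.keys (a - Poly_Mapping.single j 1) \<subseteq> Poly_Mapping.keys a"
proof -
  have "Poly_Mapping.lookup a j \<ge> 1" using j by (simp add: in_keys_iff)
  then show "a = (a - Poly_Mapping.single j 1) + Poly_Mapping.single j 1"
    by (intro poly_mapping_eqI) (auto simp: lookup_add lookup_minus lookup_single when_def)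
  show "Poly_Mapping.keys (a - Poly_Mapping.single j 1) \<subseteq> Poly_Mapping.keys a"
    by (auto simp: in_keys_iff lookup_minus)
qed

lemma mon_eval_single1: "mon_eval (Poly_Mapping.single j k) x = x j ^ k"
  by (simp add: mon_eval_def)

lemma single_as_Cst: "Poly_Mapping.single a c = Cst c * Poly_Mapping.single a 1"
  unfolding Cst_def by (simp add: mult_single)

lemma Var_mult_single: "Poly_Mapping.single a 1 * Var j = Poly_Mapping.single (a + Poly_Mapping.single j 1) (1::complex)"
  unfolding Var_def by (simp add: mult_single)

lemma Cst_inv_cancel: "c \<noteq> 0 \<Longrightarrow> Cst c * (Cst (inverse c) * q) = q"
  by (simp add: mult.assoc[symmetric] Cst_mult[symmetric])

locale loc1 = loc0 +
  assumes pt: "proj_point r p"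
begin

definition "i0 = (LEAST i. p i \<noteq> 0)"
definition "c0 = p i0"
definition "x0 = Var i0"
definition "lam j = Cst c0 * Var j - Cst (p j) * x0"
definition "Z = (\<lambda>j. cls (lam j, x0)) ` {..r}"
definition "Yv j = cls (Cst c0 * Var j, x0)"
definition "Um a = cls (Cst (c0 ^ mon_deg a) * Poly_Mapping.single a 1, x0 ^ mon_deg a)"

lemma i0: "p i0 \<noteq> 0" "i0 \<le> r"
proof -
  obtain i where i: "i \<le> r" "p i \<noteq> 0" using pt unfolding proj_point_def by blast
  show "p i0 \<noteq> 0" unfolding i0_def using i(2) by (rule LeastI)
  have "i0 \<le> i" unfolding i0_def using i(2) by (rule Least_le)
  then show "i0 \<le> r" using i(1) by simp
qed

lemma c0: "c0 \<noteq> 0" unfolding c0_def using i0 by simp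

lemma x0: "in_S r x0" "homog 1 x0" "mpoly_eval x0 p = c0"
proof -
  show "in_S r x0" unfolding x0_def using i0 by (simp add: in_S_Var)
  show "homog 1 x0" unfolding x0_def by (rule homog_Var)
  show "mpoly_eval x0 p = c0" unfolding x0_def c0_def by (simp add: mpoly_eval_Var)
qed

lemma x0pow: "in_S r (x0 ^ d)" "homog d (x0 ^ d)" "mpoly_eval (x0 ^ d) p = c0 ^ d"
  using x0 homog_power[OF x0(2), of d] by (auto simp: in_S_power mpoly_eval_power)

lemma RRc: "cring RR" by (rule RR_cring)

lemma Yv_dom: "j \<le> r \<Longrightarrow> (Cst c0 * Var j, x0) \<in> FD"
  using x0 c0 homog_mult[OF homog_Cst homog_Var]
  by (intro frac_domI[where d=1]) (auto simp: in_S_mult in_S_Var)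

lemma lam_dom: "j \<le> r \<Longrightarrow> (lam j, x0) \<in> FD"
proof -
  assume j: "j \<le> r"
  have "homog 1 (Cst c0 * Var j)" using homog_mult[OF homog_Cst homog_Var] by simp
  moreover have "homog 1 (Cst (p j) * x0)" using homog_mult[OF homog_Cst x0(2)] by simp
  ultimately have "homog 1 (lam j)" unfolding lam_def by (rule homog_diff)
  then show ?thesis using x0 c0 j unfolding lam_def
    by (intro frac_domI[where d=1]) (auto simp: in_S_mult in_S_Var in_S_diff)
qed

lemma Um_dom: "Poly_Mapping.keys a \<subseteq> {..r} \<Longrightarrow>
    (Cst (c0 ^ mon_deg a) * Poly_Mapping.single a 1, x0 ^ mon_deg a) \<in> FD"
  using x0pow c0 homog_mult[OF homog_Cst homog_single[of a "mon_deg a" 1]]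
  by (intro frac_domI[where d="mon_deg a"]) (auto simp: in_S_mult in_S_single)

lemma Z_sub: "Z \<subseteq> carrier RR"
  unfolding Z_def using lam_dom cls_in by blast

lemma Z_fin: "finite Z"
  unfolding Z_def by simp

lemma Yv_in: "j \<le> r \<Longrightarrow> Yv j \<in> carrier RR"
  unfolding Yv_def using Yv_dom cls_in by blast

lemma Um_in: "Poly_Mapping.keys a \<subseteq> {..r} \<Longrightarrow> Um a \<in> carrier RR"
  unfolding Um_def using Um_dom cls_in by blast

lemma Yv_eq: "j \<le> r \<Longrightarrow> Yv j = emb (p j) \<oplus>\<^bsub>RR\<^esub> cls (lam j, x0)"
proof -
  assume j: "j \<le> r"
  have "emb (p j) \<oplus>\<^bsub>RR\<^esub> cls (lam j, x0) = cls (addp (Cst (p j), 1) (lam j, x0))"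
    unfolding emb_def by (rule cls_add[OF cst_dom lam_dom[OF j]])
  also have "\<dots> = Yv j" unfolding Yv_def
    by (rule cls_eqI[OF addp_dom[OF cst_dom lam_dom[OF j]] Yv_dom[OF j]])
       (simp add: addp_def lam_def algebra_simps)
  finally show ?thesis by simp
qed

lemma Idl_Z_ideal: "ideal (genideal RR Z) RR"
proof -
  interpret C: cring RR by (rule RRc)
  show ?thesis using C.genideal_ideal[OF Z_sub] .
qed

lemma Z_in_Idl: "j \<le> r \<Longrightarrow> cls (lam j, x0) \<in> genideal RR Z"
proof -
  assume j: "j \<le> r"
  have "cls (lam j, x0) \<in> Z" unfolding Z_def using j by blast
  then show ?thesis using ring.genideal_self[OF cring.axioms(1)[OF RRc] Z_sub] by blast
qed

lemma Yv_minus: "j \<le> r \<Longrightarrow> Yv j \<ominus>\<^bsub>RR\<^esub> emb (p j) \<in> genideal RR Z"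
proof -
  assume j: "j \<le> r"
  interpret C: cring RR by (rule RRc)
  have zc: "cls (lam j, x0) \<in> carrier RR" using cls_in[OF lam_dom[OF j]] .
  have ec: "emb (p j) \<in> carrier RR" by (rule emb_in)
  have "Yv j \<ominus>\<^bsub>RR\<^esub> emb (p j) = cls (lam j, x0)" unfolding Yv_eq[OF j] using zc ec by algebra
  then show ?thesis using Z_in_Idl[OF j] by simp
qed

lemma Um_step:
  assumes a: "Poly_Mapping.keys a \<subseteq> {..r}" and j: "j \<le> r"
  shows "Um (a + Poly_Mapping.single j 1) = Um a \<otimes>\<^bsub>RR\<^esub> Yv j"
proof -
  have md: "mon_deg (a + Poly_Mapping.single j 1) = Suc (mon_deg a)" by (simp add: mon_deg_add mon_deg_single)
  have a': "Poly_Mapping.keys (a + Poly_Mapping.single j 1) \<subseteq> {..r}" using a j by (auto simp: keys_add_nat)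
  have "Um a \<otimes>\<^bsub>RR\<^esub> Yv j = cls (mulp (Cst (c0 ^ mon_deg a) * Poly_Mapping.single a 1, x0 ^ mon_deg a) (Cst c0 * Var j, x0))"
    unfolding Um_def Yv_def by (rule cls_mult[OF Um_dom[OF a] Yv_dom[OF j]])
  also have "\<dots> = Um (a + Poly_Mapping.single j 1)"
    unfolding Um_def
    apply (rule cls_eqI[OF mulp_dom[OF Um_dom[OF a] Yv_dom[OF j]] Um_dom[OF a']])
    apply (simp only: md Var_mult_single[symmetric] mulp_def fst_conv snd_conv)
    apply (simp add: Cst_mult algebra_simps)
    done
  finally show ?thesis by simp
qed

lemma mon_lemma: "Poly_Mapping.keys a \<subseteq> {..r} \<Longrightarrow> Um a \<ominus>\<^bsub>RR\<^esub> emb (mon_eval a p) \<in> genideal RR Z"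
proof (induction "mon_deg a" arbitrary: a)
  case 0
  interpret C: cring RR by (rule RRc)
  have a0: "a = 0" using mon_deg_zero_iff 0(1) by simp
  have "Um a = \<one>\<^bsub>RR\<^esub>" unfolding Um_def a0 one_R by simp
  moreover have "emb (mon_eval a p) = \<one>\<^bsub>RR\<^esub>" unfolding a0 by (simp add: emb_one)
  ultimately have "Um a \<ominus>\<^bsub>RR\<^esub> emb (mon_eval a p) = \<zero>\<^bsub>RR\<^esub>" by (simp add: a_minus_def C.r_neg)
  then show ?case using C.ideal_zero[OF Idl_Z_ideal] by simp
next
  case (Suc n a)
  interpret C: cring RR by (rule RRc)
  have "a \<noteq> 0" using Suc(2) by auto
  then obtain j where j: "j \<in> Poly_Mapping.keys a" by (metis keys_eq_empty ex_in_conv)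
  define a' where "a' = a - Poly_Mapping.single j 1"
  have ad: "a = a' + Poly_Mapping.single j 1" unfolding a'_def using mon_decomp(1)[OF j] .
  have ka': "Poly_Mapping.keys a' \<subseteq> {..r}" unfolding a'_def using mon_decomp(2)[OF j] Suc(3) by blast
  have jr: "j \<le> r" using j Suc(3) by blast
  have "mon_deg a = Suc (mon_deg a')" using ad by (simp add: mon_deg_add mon_deg_single)
  then have n: "n = mon_deg a'" using Suc(2) by simp
  have IH: "Um a' \<ominus>\<^bsub>RR\<^esub> emb (mon_eval a' p) \<in> genideal RR Z" using Suc(1)[OF n ka'] .
  have U: "Um a = Um a' \<otimes>\<^bsub>RR\<^esub> Yv j" unfolding ad using Um_step[OF ka' jr] .
  have E: "emb (mon_eval a p) = emb (mon_eval a' p) \<otimes>\<^bsub>RR\<^esub> emb (p j)"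
    unfolding ad by (simp add: mon_eval_add mon_eval_single1 emb_mult)
  have uc: "Um a' \<in> carrier RR" using Um_in[OF ka'] .
  have yc: "Yv j \<in> carrier RR" using Yv_in[OF jr] .
  have e1: "emb (mon_eval a' p) \<in> carrier RR" by (rule emb_in)
  have e2: "emb (p j) \<in> carrier RR" by (rule emb_in)
  have "Um a \<ominus>\<^bsub>RR\<^esub> emb (mon_eval a p) =
      (Um a' \<ominus>\<^bsub>RR\<^esub> emb (mon_eval a' p)) \<otimes>\<^bsub>RR\<^esub> Yv j \<oplus>\<^bsub>RR\<^esub> emb (mon_eval a' p) \<otimes>\<^bsub>RR\<^esub> (Yv j \<ominus>\<^bsub>RR\<^esub> emb (p j))"
    unfolding U E using uc yc e1 e2 by algebra
  moreover have "(Um a' \<ominus>\<^bsub>RR\<^esub> emb (mon_eval a' p)) \<otimes>\<^bsub>RR\<^esub> Yv j \<in> genideal RR Z"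
    using ideal.I_r_closed[OF Idl_Z_ideal IH yc] .
  moreover have "emb (mon_eval a' p) \<otimes>\<^bsub>RR\<^esub> (Yv j \<ominus>\<^bsub>RR\<^esub> emb (p j)) \<in> genideal RR Z"
    using ideal.I_l_closed[OF Idl_Z_ideal Yv_minus[OF jr] e1] .
  ultimately show ?case using C.ideal_add[OF Idl_Z_ideal] by simp
qed

lemma dom_d: "in_S r u \<Longrightarrow> homog d u \<Longrightarrow> (u, x0 ^ d) \<in> FD"
  using x0pow c0 by (intro frac_domI[where d=d]) auto

lemma homog_Cst_mult: "homog d f \<Longrightarrow> homog d (Cst c * f)"
  using homog_mult[OF homog_Cst, of d f c] by simp

lemma poly_lemma:
  "in_S r f \<Longrightarrow> homog d f \<Longrightarrow>
    cls (Cst (c0 ^ d) * f, x0 ^ d) \<ominus>\<^bsub>RR\<^esub> emb (mpoly_eval f p) \<in> genideal RR Z"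
proof (induction f rule: mpoly_induct)
  case zero
  interpret C: cring RR by (rule RRc)
  have "cls (Cst (c0 ^ d) * 0, x0 ^ d) = \<zero>\<^bsub>RR\<^esub>" unfolding zero_R
    by (simp, rule cls_eqI[OF dom_d zero_dom]) auto
  moreover have "emb (mpoly_eval 0 p) = \<zero>\<^bsub>RR\<^esub>" by (simp add: emb_zero)
  ultimately show ?case using C.ideal_zero[OF Idl_Z_ideal] by (simp add: a_minus_def)
next
  case (add f a c)
  interpret C: cring RR by (rule RRc)
  have Sf: "in_S r f" and ka: "Poly_Mapping.keys a \<subseteq> {..r}" using in_S_add_single_D[OF add(1,2,4)] by auto
  have hf: "homog d f" and ma: "mon_deg a = d" using homog_add_single_D[OF add(1,2,5)] by auto
  have IH: "cls (Cst (c0 ^ d) * f, x0 ^ d) \<ominus>\<^bsub>RR\<^esub> emb (mpoly_eval f p) \<in> genideal RR Z"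
    using add(3)[OF Sf hf] .
  have hm: "homog d (Poly_Mapping.single a c)" using homog_single[OF ma] .
  have Sm: "in_S r (Poly_Mapping.single a c)" using in_S_single[OF ka] .
  have d1: "(Cst (c0 ^ d) * f, x0 ^ d) \<in> FD" using dom_d in_S_mult[OF in_S_Cst Sf] homog_Cst_mult[OF hf] by blast
  have d2: "(Cst (c0 ^ d) * Poly_Mapping.single a c, x0 ^ d) \<in> FD"
    using dom_d in_S_mult[OF in_S_Cst Sm] homog_Cst_mult[OF hm] by blast
  have d3: "(Cst (c0 ^ d) * (f + Poly_Mapping.single a c), x0 ^ d) \<in> FD"
    using dom_d in_S_mult[OF in_S_Cst in_S_add[OF Sf Sm]] homog_Cst_mult[OF homog_add[OF hf hm]] by blast
  define A1 where "A1 = cls (Cst (c0 ^ d) * f, x0 ^ d)"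
  have A1c: "A1 \<in> carrier RR" unfolding A1_def using cls_in[OF d1] .
  have sumeq: "cls (Cst (c0 ^ d) * (f + Poly_Mapping.single a c), x0 ^ d)
      = A1 \<oplus>\<^bsub>RR\<^esub> cls (Cst (c0 ^ d) * Poly_Mapping.single a c, x0 ^ d)"
    unfolding A1_def cls_add[OF d1 d2]
    by (rule cls_eqI[OF d3 addp_dom[OF d1 d2]]) (simp add: addp_def algebra_simps)
  have ud: "(Cst (c0 ^ mon_deg a) * Poly_Mapping.single a 1, x0 ^ mon_deg a) \<in> FD" using Um_dom[OF ka] .
  have meq: "cls (Cst (c0 ^ d) * Poly_Mapping.single a c, x0 ^ d) = emb c \<otimes>\<^bsub>RR\<^esub> Um a"
    unfolding emb_def Um_def cls_mult[OF cst_dom ud]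
    by (rule cls_eqI[OF d2 mulp_dom[OF cst_dom ud]])
       (simp add: ma mulp_def single_as_Cst[of a c] algebra_simps)
  have eeq: "emb (mpoly_eval (f + Poly_Mapping.single a c) p)
      = emb (mpoly_eval f p) \<oplus>\<^bsub>RR\<^esub> emb c \<otimes>\<^bsub>RR\<^esub> emb (mon_eval a p)"
    by (simp add: mpoly_eval_add mpoly_eval_single emb_add emb_mult)
  have uc: "Um a \<in> carrier RR" using Um_in[OF ka] .
  have e1: "emb (mpoly_eval f p) \<in> carrier RR" by (rule emb_in)
  have e2: "emb c \<in> carrier RR" by (rule emb_in)
  have e3: "emb (mon_eval a p) \<in> carrier RR" by (rule emb_in)
  have "cls (Cst (c0 ^ d) * (f + Poly_Mapping.single a c), x0 ^ d) \<ominus>\<^bsub>RR\<^esub> emb (mpoly_eval (f + Poly_Mapping.single a c) p)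
     = (A1 \<ominus>\<^bsub>RR\<^esub> emb (mpoly_eval f p)) \<oplus>\<^bsub>RR\<^esub> emb c \<otimes>\<^bsub>RR\<^esub> (Um a \<ominus>\<^bsub>RR\<^esub> emb (mon_eval a p))"
    unfolding sumeq meq eeq using A1c uc e1 e2 e3 by algebra
  moreover have "A1 \<ominus>\<^bsub>RR\<^esub> emb (mpoly_eval f p) \<in> genideal RR Z" using IH unfolding A1_def .
  moreover have "emb c \<otimes>\<^bsub>RR\<^esub> (Um a \<ominus>\<^bsub>RR\<^esub> emb (mon_eval a p)) \<in> genideal RR Z"
    using ideal.I_l_closed[OF Idl_Z_ideal mon_lemma[OF ka] e2] .
  ultimately show ?case using C.ideal_add[OF Idl_Z_ideal] by simp
qed

lemma max_fg: "max_ideal RR = genideal RR Z"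
proof
  interpret C: cring RR by (rule RRc)
  show "genideal RR Z \<subseteq> max_ideal RR"
  proof (rule C.genideal_minimal[OF max_ideal_ideal])
    show "Z \<subseteq> max_ideal RR"
    proof
      fix z assume "z \<in> Z"
      then obtain j where j: "j \<le> r" "z = cls (lam j, x0)" unfolding Z_def by blast
      have "val z = mpoly_eval (lam j) p / mpoly_eval x0 p" using val_cls[OF lam_dom[OF j(1)]] j(2) by simp
      also have "mpoly_eval (lam j) p = 0" unfolding lam_def
        by (simp add: mpoly_eval_diff mpoly_eval_mult mpoly_eval_Var x0 c0_def)
      finally have "val z = 0" by simp
      then show "z \<in> max_ideal RR" unfolding max_ideal_val using cls_in[OF lam_dom[OF j(1)]] j(2) by simp
    qed
  qed
next
  interpret C: cring RR by (rule RRc)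
  show "max_ideal RR \<subseteq> genideal RR Z"
  proof
    fix A assume A: "A \<in> max_ideal RR"
    then have Ac: "A \<in> carrier RR" and vA: "val A = 0" unfolding max_ideal_val by auto
    from Ac obtain x where x: "x \<in> FD" and Ax: "A = cls x" by (elim carrier_E)
    obtain d where d: "homog d (fst x)" "homog d (snd x)" using frac_domD(4)[OF x] by blast
    have f0: "mpoly_eval (fst x) p = 0" using vA val_cls[OF x] Ax frac_domD(3)[OF x] by simp
    have "cls (Cst (c0 ^ d) * fst x, x0 ^ d) \<ominus>\<^bsub>RR\<^esub> emb (mpoly_eval (fst x) p) \<in> genideal RR Z"
      using poly_lemma[OF frac_domD(1)[OF x] d(1)] .
    moreover have d1: "(Cst (c0 ^ d) * fst x, x0 ^ d) \<in> FD"
      using dom_d in_S_mult[OF in_S_Cst frac_domD(1)[OF x]] homog_Cst_mult[OF d(1)] by blast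
    ultimately have B: "cls (Cst (c0 ^ d) * fst x, x0 ^ d) \<in> genideal RR Z"
      using cls_in[OF d1] by (simp add: f0 emb_zero a_minus_def)
    have d2: "(Cst (inverse (c0 ^ d)) * x0 ^ d, snd x) \<in> FD"
      using x0pow frac_domD[OF x] d(2) homog_Cst_mult[OF x0pow(2)]
      by (intro frac_domI[where d=d]) (auto simp: in_S_mult)
    have c0d: "c0 ^ d \<noteq> 0" using c0 by simp
    have "cls (Cst (c0 ^ d) * fst x, x0 ^ d) \<otimes>\<^bsub>RR\<^esub> cls (Cst (inverse (c0 ^ d)) * x0 ^ d, snd x) = cls x"
      unfolding cls_mult[OF d1 d2]
    proof (rule cls_eqI[OF mulp_dom[OF d1 d2] x])
      have "Cst (c0 ^ d) * fst x * (Cst (inverse (c0 ^ d)) * x0 ^ d) * snd x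
          = Cst (c0 ^ d) * (Cst (inverse (c0 ^ d)) * (fst x * x0 ^ d * snd x))"
        by (simp add: algebra_simps)
      also have "\<dots> = fst x * x0 ^ d * snd x" using Cst_inv_cancel[OF c0d] by simp
      finally show "fst (mulp (Cst (c0 ^ d) * fst x, x0 ^ d) (Cst (inverse (c0 ^ d)) * x0 ^ d, snd x)) * snd x =
          fst x * snd (mulp (Cst (c0 ^ d) * fst x, x0 ^ d) (Cst (inverse (c0 ^ d)) * x0 ^ d, snd x))"
        by (simp add: mulp_def algebra_simps)
    qed
    then show "A \<in> genideal RR Z" unfolding Ax using ideal.I_r_closed[OF Idl_Z_ideal B cls_in[OF d2]] by simp
  qed
qed

end

lemma S_ideal_S: "S_ideal r {f. in_S r f}"
  unfolding S_ideal_def by (auto simp: in_S_add in_S_mult)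

lemma S_ideal_van: "S_ideal r {f. in_S r f \<and> mpoly_eval f p = 0}"
  unfolding S_ideal_def by (auto simp: in_S_add in_S_mult mpoly_eval_add mpoly_eval_mult)

lemma SI_0: "S_ideal r I \<Longrightarrow> 0 \<in> I" unfolding S_ideal_def by blast
lemma SI_add: "S_ideal r I \<Longrightarrow> f \<in> I \<Longrightarrow> g \<in> I \<Longrightarrow> f + g \<in> I" unfolding S_ideal_def by blast
lemma SI_mult: "S_ideal r I \<Longrightarrow> f \<in> I \<Longrightarrow> in_S r g \<Longrightarrow> g * f \<in> I" unfolding S_ideal_def by blast
lemma SI_S: "S_ideal r I \<Longrightarrow> f \<in> I \<Longrightarrow> in_S r f" unfolding S_ideal_def by blast

lemma S_gen_ideal_ideal:
  assumes "\<forall>g\<in>G. in_S r g"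
  shows "S_ideal r (S_gen_ideal r G)"
proof -
  let ?F = "{I. S_ideal r I \<and> G \<subseteq> I}"
  have ne: "{f. in_S r f} \<in> ?F" using S_ideal_S[of r] assms by auto
  have 1: "\<forall>f\<in>\<Inter>?F. in_S r f" using ne by blast
  have 2: "0 \<in> \<Inter>?F"
  proof (rule InterI)
    fix I assume "I \<in> ?F" then show "0 \<in> I" using SI_0 by blast
  qed
  have 3: "\<forall>f\<in>\<Inter>?F. \<forall>g\<in>\<Inter>?F. f + g \<in> \<Inter>?F"
  proof (intro ballI InterI)
    fix f g I assume "f \<in> \<Inter>?F" "g \<in> \<Inter>?F" "I \<in> ?F"
    then show "f + g \<in> I" using SI_add[of r I f g] by blast
  qed
  have 4: "\<forall>f\<in>\<Inter>?F. \<forall>g. in_S r g \<longrightarrow> g * f \<in> \<Inter>?F"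
  proof (intro ballI allI impI InterI)
    fix f g I assume "f \<in> \<Inter>?F" "in_S r g" "I \<in> ?F"
    then show "g * f \<in> I" using SI_mult[of r I f g] by blast
  qed
  have "S_ideal r (\<Inter>?F)" unfolding S_ideal_def[of r "\<Inter>?F"] by (intro conjI 1 2 3 4)
  then show ?thesis unfolding S_gen_ideal_def .
qed

lemma S_gen_ideal_sup: "G \<subseteq> S_gen_ideal r G"
  unfolding S_gen_ideal_def by blast

lemma S_gen_ideal_min: "S_ideal r J \<Longrightarrow> G \<subseteq> J \<Longrightarrow> S_gen_ideal r G \<subseteq> J"
  unfolding S_gen_ideal_def by blast

section \<open>Transfer map\<close>

definition phi :: "nat \<Rightarrow> mpoly set \<Rightarrow> (nat \<Rightarrow> complex) \<Rightarrow> (mpoly \<times> mpoly) set \<Rightarrow> (mpoly \<times> mpoly) set" where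
  "phi r I p A = frac_cls r I p (frac_rep A)"

lemma eqv_mono: "P \<subseteq> I \<Longrightarrow> eqv r P p x y \<Longrightarrow> eqv r I p x y"
  unfolding eqv_def by blast

lemma phi_cls:
  assumes "loc r P" "loc r I" "P \<subseteq> I" "x \<in> frac_dom r p"
  shows "phi r I p (frac_cls r P p x) = frac_cls r I p x"
proof -
  interpret A: loc r P p by fact
  interpret B: loc r I p by fact
  have "eqv r P p x (frac_rep (frac_cls r P p x))" using A.rep_eq[OF assms(4)] .
  then have "eqv r I p x (frac_rep (frac_cls r P p x))" using eqv_mono[OF assms(3)] by blast
  then have "frac_cls r I p x = frac_cls r I p (frac_rep (frac_cls r P p x))"
    using B.cls_eq_iff[OF assms(4) A.rep_dom[OF assms(4)]] by blast
  then show ?thesis unfolding phi_def by simp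
qed

lemma ideal_pow_decr:
  assumes "cring R" "ideal M R"
  shows "n \<le> k \<Longrightarrow> ideal_pow R M k \<subseteq> ideal_pow R M n"
proof (induction k)
  case 0 then show ?case by simp
next
  case (Suc k)
  interpret C: cring R by fact
  have "ideal_pow R M (Suc k) \<subseteq> ideal_pow R M k"
    using C.ip_sub_right[OF assms(2) C.ideal_pow_ideal[OF assms(2)]] by simp
  then show ?case using Suc by (cases "n = Suc k") auto
qed

theorem lemma3p4:
  fixes r :: nat and P :: "mpoly set" and p :: "nat \<Rightarrow> complex" and m :: nat
    and ls :: "mpoly list"
  assumes X: "proj_variety r P"
    and pt: "proj_point r p" and pX: "on_subscheme P p"
    and m_pos: "0 < m"
    and hyp: "\<forall>J. is_minimal_reduction_of_max (local_ring r P p) J \<longrightarrow>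
                 ideal_pow (local_ring r P p) (max_ideal (local_ring r P p)) m \<subseteq> J"
    and L: "reduction_linear_subspace r P p ls"
  shows "loewy_length (local_ring r (intersection_ideal r P ls) p) \<le> m - 1"
proof -
  have SP: "S_ideal r P" using X unfolding proj_variety_def S_homogeneous_ideal_def by blast
  have Pvan: "\<And>f. f \<in> P \<Longrightarrow> mpoly_eval f p = 0" using pX unfolding on_subscheme_def by blast
  interpret A: loc1 r P p
    apply unfold_locales
      apply (rule SP)
     apply (erule Pvan)
    apply (rule pt)
    done
  have ls: "\<And>l. l \<in> set ls \<Longrightarrow> in_S r l \<and> homog 1 l \<and> mpoly_eval l p = 0"
    using L unfolding reduction_linear_subspace_def linear_form_def by blast
  have lsS: "\<forall>g\<in>P \<union> set ls. in_S r g" using SI_S[OF SP] ls by blast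
  define I where "I = intersection_ideal r P ls"
  have SI: "S_ideal r I" unfolding I_def intersection_ideal_def using S_gen_ideal_ideal[OF lsS] .
  have PlsI: "P \<union> set ls \<subseteq> I" unfolding I_def intersection_ideal_def by (rule S_gen_ideal_sup)
  have PI: "P \<subseteq> I" using PlsI by blast
  have vsub: "P \<union> set ls \<subseteq> {f. in_S r f \<and> mpoly_eval f p = 0}" using lsS Pvan ls by blast
  have Ivan: "\<And>f. f \<in> I \<Longrightarrow> mpoly_eval f p = 0"
    using S_gen_ideal_min[OF S_ideal_van vsub] unfolding I_def intersection_ideal_def by blast
  interpret B: loc0 r I p
    apply unfold_locales
     apply (rule SI)
    apply (erule Ivan)
    done
  interpret CA: cring A.RR by (rule A.RRc)
  interpret CB: cring B.RR by (rule B.RR_cring)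
  define G0 where "G0 = germ_of_linear_form r P p ` set ls"
  have germ: "\<And>l. germ_of_linear_form r P p l = A.cls (l, A.x0)"
    unfolding germ_of_linear_form_def A.x0_def A.i0_def ..
  have gdom: "\<And>l. l \<in> set ls \<Longrightarrow> (l, A.x0) \<in> frac_dom r p"
    using ls A.x0 A.c0 by (intro frac_domI[where d=1]) auto
  have G0c: "G0 \<subseteq> carrier A.RR" unfolding G0_def germ using gdom A.cls_in by blast
  have G0fin: "finite G0" unfolding G0_def by simp
  have red0: "is_reduction_of_max A.RR (genideal A.RR G0)"
    using L unfolding reduction_linear_subspace_def G0_def by blast
  obtain J where J: "is_minimal_reduction_of_max A.RR J" "J \<subseteq> genideal A.RR G0"
    using CA.exists_min_red[OF A.max_ideal_ideal A.Z_fin A.Z_sub A.max_fg G0fin G0c red0] by blast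
  have powJ: "ideal_pow A.RR (max_ideal A.RR) m \<subseteq> J" using hyp J(1) by blast
  define \<phi> where "\<phi> = phi r I p"
  have locP: "loc r P" by (simp add: loc_def SP)
  have locI: "loc r I" by (simp add: loc_def SI)
  have phic: "\<And>x. x \<in> frac_dom r p \<Longrightarrow> \<phi> (A.cls x) = B.cls x"
    unfolding \<phi>_def using phi_cls[OF locP locI PI] by blast
  have phi_in: "\<And>a. a \<in> carrier A.RR \<Longrightarrow> \<phi> a \<in> carrier B.RR"
    by (elim A.carrier_E) (simp add: phic B.cls_in)
  have phi_mult: "\<And>a b. a \<in> carrier A.RR \<Longrightarrow> b \<in> carrier A.RR \<Longrightarrow>
      \<phi> (a \<otimes>\<^bsub>A.RR\<^esub> b) = \<phi> a \<otimes>\<^bsub>B.RR\<^esub> \<phi> b"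
    by (elim A.carrier_E) (simp add: A.cls_mult B.cls_mult phic mulp_dom)
  have phi_add: "\<And>a b. a \<in> carrier A.RR \<Longrightarrow> b \<in> carrier A.RR \<Longrightarrow>
      \<phi> (a \<oplus>\<^bsub>A.RR\<^esub> b) = \<phi> a \<oplus>\<^bsub>B.RR\<^esub> \<phi> b"
    by (elim A.carrier_E) (simp add: A.cls_add B.cls_add phic addp_dom)
  have phi_zero: "\<phi> \<zero>\<^bsub>A.RR\<^esub> = \<zero>\<^bsub>B.RR\<^esub>" unfolding A.zero_R B.zero_R using phic[OF zero_dom] .
  have phi_surj: "carrier B.RR \<subseteq> \<phi> ` carrier A.RR"
  proof
    fix b assume "b \<in> carrier B.RR"
    then obtain x where x: "x \<in> frac_dom r p" "b = B.cls x" by (elim B.carrier_E)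
    then show "b \<in> \<phi> ` carrier A.RR" using phic[OF x(1)] A.cls_in[OF x(1)] by force
  qed
  have phi_max: "max_ideal B.RR \<subseteq> \<phi> ` max_ideal A.RR"
  proof
    fix b assume b: "b \<in> max_ideal B.RR"
    then have bc: "b \<in> carrier B.RR" and vb: "B.val b = 0" unfolding B.max_ideal_val by auto
    then obtain x where x: "x \<in> frac_dom r p" "b = B.cls x" by (elim B.carrier_E)
    have "A.val (A.cls x) = 0" using vb B.val_cls[OF x(1)] A.val_cls[OF x(1)] x(2) by simp
    then have "A.cls x \<in> max_ideal A.RR" unfolding A.max_ideal_val using A.cls_in[OF x(1)] by simp
    then show "b \<in> \<phi> ` max_ideal A.RR" using phic[OF x(1)] x(2) by force
  qed
  define Ker where "Ker = {a \<in> carrier A.RR. \<phi> a = \<zero>\<^bsub>B.RR\<^esub>}"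
  have iKer: "ideal Ker A.RR" unfolding Ker_def
  proof (rule idealI[OF CA.ring_axioms])
    show "subgroup {a \<in> carrier A.RR. \<phi> a = \<zero>\<^bsub>B.RR\<^esub>} (add_monoid A.RR)"
    proof (rule CA.add.subgroupI)
      show "{a \<in> carrier A.RR. \<phi> a = \<zero>\<^bsub>B.RR\<^esub>} \<subseteq> carrier A.RR" by auto
      show "{a \<in> carrier A.RR. \<phi> a = \<zero>\<^bsub>B.RR\<^esub>} \<noteq> {}" using phi_zero CA.zero_closed by blast
    next
      fix a assume a: "a \<in> {a \<in> carrier A.RR. \<phi> a = \<zero>\<^bsub>B.RR\<^esub>}"
      then have ac: "a \<in> carrier A.RR" and pa: "\<phi> a = \<zero>\<^bsub>B.RR\<^esub>" by auto
      have nc: "\<ominus>\<^bsub>A.RR\<^esub> a \<in> carrier A.RR" using CA.a_inv_closed[OF ac] .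
      have "\<phi> (a \<oplus>\<^bsub>A.RR\<^esub> \<ominus>\<^bsub>A.RR\<^esub> a) = \<zero>\<^bsub>B.RR\<^esub>" using CA.r_neg[OF ac] phi_zero by simp
      then have "\<zero>\<^bsub>B.RR\<^esub> \<oplus>\<^bsub>B.RR\<^esub> \<phi> (\<ominus>\<^bsub>A.RR\<^esub> a) = \<zero>\<^bsub>B.RR\<^esub>" using phi_add[OF ac nc] pa by simp
      then have "\<phi> (\<ominus>\<^bsub>A.RR\<^esub> a) = \<zero>\<^bsub>B.RR\<^esub>" using phi_in[OF nc] by simp
      then show "\<ominus>\<^bsub>A.RR\<^esub> a \<in> {a \<in> carrier A.RR. \<phi> a = \<zero>\<^bsub>B.RR\<^esub>}" using nc by simp
    next
      fix a b assume "a \<in> {a \<in> carrier A.RR. \<phi> a = \<zero>\<^bsub>B.RR\<^esub>}" "b \<in> {a \<in> carrier A.RR. \<phi> a = \<zero>\<^bsub>B.RR\<^esub>}"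
      then show "a \<oplus>\<^bsub>A.RR\<^esub> b \<in> {a \<in> carrier A.RR. \<phi> a = \<zero>\<^bsub>B.RR\<^esub>}" by (simp add: phi_add)
    qed
  next
    fix a x assume "a \<in> {a \<in> carrier A.RR. \<phi> a = \<zero>\<^bsub>B.RR\<^esub>}" "x \<in> carrier A.RR"
    then show "x \<otimes>\<^bsub>A.RR\<^esub> a \<in> {a \<in> carrier A.RR. \<phi> a = \<zero>\<^bsub>B.RR\<^esub>}" by (simp add: phi_mult phi_in)
  next
    fix a x assume "a \<in> {a \<in> carrier A.RR. \<phi> a = \<zero>\<^bsub>B.RR\<^esub>}" "x \<in> carrier A.RR"
    then show "a \<otimes>\<^bsub>A.RR\<^esub> x \<in> {a \<in> carrier A.RR. \<phi> a = \<zero>\<^bsub>B.RR\<^esub>}" by (simp add: phi_mult phi_in)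
  qed
  have G0Ker: "G0 \<subseteq> Ker"
  proof
    fix g assume "g \<in> G0"
    then obtain l where l: "l \<in> set ls" "g = A.cls (l, A.x0)" unfolding G0_def germ by blast
    have lI: "l \<in> I" using l(1) PlsI by blast
    have "eqv r I p (l, A.x0) (0, 1)" unfolding eqv_def
      by (rule exI[of _ 1], rule exI[of _ 0]) (simp add: lI)
    then have "B.cls (l, A.x0) = \<zero>\<^bsub>B.RR\<^esub>" unfolding B.zero_R using B.cls_eq_iff[OF gdom[OF l(1)] zero_dom] by simp
    then show "g \<in> Ker" unfolding Ker_def using l phic[OF gdom[OF l(1)]] A.cls_in[OF gdom[OF l(1)]] by simp
  qed
  have JKer: "J \<subseteq> Ker" using J(2) CA.genideal_minimal[OF iKer G0Ker] by blast
  have pw: "ideal_pow B.RR (max_ideal B.RR) k \<subseteq> \<phi> ` ideal_pow A.RR (max_ideal A.RR) k" for k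
  proof (induction k)
    case 0
    then show ?case using phi_surj by simp
  next
    case (Suc k)
    show ?case
    proof
      fix x assume "x \<in> ideal_pow B.RR (max_ideal B.RR) (Suc k)"
      then have "x \<in> ideal_prod B.RR (max_ideal B.RR) (ideal_pow B.RR (max_ideal B.RR) k)" by simp
      then show "x \<in> \<phi> ` ideal_pow A.RR (max_ideal A.RR) (Suc k)"
      proof (induction x rule: ideal_prod.induct)
        case (prod i j)
        obtain a where a: "a \<in> max_ideal A.RR" "i = \<phi> a" using prod(1) phi_max by blast
        obtain b where b: "b \<in> ideal_pow A.RR (max_ideal A.RR) k" "j = \<phi> b" using prod(2) Suc.IH by blast
        have ac: "a \<in> carrier A.RR" using a(1) CA.max_ideal_carrier by blast
        have bc: "b \<in> carrier A.RR"
          using b(1) CA.ideal_sub[OF CA.ideal_pow_ideal[OF A.max_ideal_ideal]] by blast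
        have "a \<otimes>\<^bsub>A.RR\<^esub> b \<in> ideal_pow A.RR (max_ideal A.RR) (Suc k)"
          using a(1) b(1) by (simp add: ideal_prod.prod)
        moreover have "i \<otimes>\<^bsub>B.RR\<^esub> j = \<phi> (a \<otimes>\<^bsub>A.RR\<^esub> b)" using a(2) b(2) phi_mult[OF ac bc] by simp
        ultimately show ?case by blast
      next
        case (sum s1 s2)
        obtain t1 where t1: "t1 \<in> ideal_pow A.RR (max_ideal A.RR) (Suc k)" "s1 = \<phi> t1" using sum.IH(1) by blast
        obtain t2 where t2: "t2 \<in> ideal_pow A.RR (max_ideal A.RR) (Suc k)" "s2 = \<phi> t2" using sum.IH(2) by blast
        have sub: "ideal_pow A.RR (max_ideal A.RR) (Suc k) \<subseteq> carrier A.RR"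
          using CA.ideal_sub[OF CA.ideal_pow_ideal[OF A.max_ideal_ideal]] .
        have "t1 \<oplus>\<^bsub>A.RR\<^esub> t2 \<in> ideal_pow A.RR (max_ideal A.RR) (Suc k)"
          using CA.ideal_add[OF CA.ideal_pow_ideal[OF A.max_ideal_ideal] t1(1) t2(1)] .
        moreover have "s1 \<oplus>\<^bsub>B.RR\<^esub> s2 = \<phi> (t1 \<oplus>\<^bsub>A.RR\<^esub> t2)"
          using t1 t2 sub phi_add by blast
        ultimately show ?case by blast
      qed
    qed
  qed
  have powB: "ideal_pow B.RR (max_ideal B.RR) m \<subseteq> {\<zero>\<^bsub>B.RR\<^esub>}"
  proof
    fix x assume "x \<in> ideal_pow B.RR (max_ideal B.RR) m"
    then obtain a where "a \<in> ideal_pow A.RR (max_ideal A.RR) m" "x = \<phi> a" using pw by blast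
    then have "a \<in> Ker" using powJ JKer by blast
    then show "x \<in> {\<zero>\<^bsub>B.RR\<^esub>}" using \<open>x = \<phi> a\<close> unfolding Ker_def by simp
  qed
  define S where "S = {i. ideal_pow B.RR (max_ideal B.RR) i \<noteq> {\<zero>\<^bsub>B.RR\<^esub>}}"
  have Slt: "S \<subseteq> {..<m}"
  proof
    fix i assume i: "i \<in> S"
    show "i \<in> {..<m}"
    proof (rule ccontr)
      assume "i \<notin> {..<m}"
      then have "m \<le> i" by simp
      then have "ideal_pow B.RR (max_ideal B.RR) i \<subseteq> ideal_pow B.RR (max_ideal B.RR) m"
        using ideal_pow_decr[OF B.RR_cring B.max_ideal_ideal] by blast
      then have "ideal_pow B.RR (max_ideal B.RR) i \<subseteq> {\<zero>\<^bsub>B.RR\<^esub>}" using powB by blast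
      moreover have "\<zero>\<^bsub>B.RR\<^esub> \<in> ideal_pow B.RR (max_ideal B.RR) i"
        using CB.ideal_zero[OF CB.ideal_pow_ideal[OF B.max_ideal_ideal]] .
      ultimately show False using i unfolding S_def by blast
    qed
  qed
  have S0: "0 \<in> S" unfolding S_def using B.one_ne_zero CB.one_closed by auto
  have Sfin: "finite S" using Slt finite_subset by blast
  have "Max S \<in> S" using Sfin S0 by (intro Max_in) auto
  then have "Max S < m" using Slt by blast
  then show ?thesis unfolding loewy_length_def S_def[symmetric] I_def[symmetric] by simp
qed

end
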